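(* Fix a cut and project scheme $(\mathbb{R}^n, \mathbb{R}^m, \mathcal{L})$ as described in the context. Let $W, W' \subset \mathbb{R}^m$ be windows (compact sets with $W=\overline{W^\circ}$, $W'=\overline{W'^\circ}$, non-empty interior, and boundaries of Lebesgue measure $0$), and let $\varLambda = t + \curlywedge(W)$ and $\varLambda' = t' + \curlywedge(W')$ for some $t,t'\in\mathbb{R}^n$ be the corresponding regular model sets. Then $\varLambda$ and $\varLambda'$ are homometric if and only if $W$ and $W'$ have the same covariogram, i.e. $g^{}_{W}(y) = g^{}_{W'}(y)$ for all $y \in \mathbb{R}^m$.
   Context: A cut and project scheme consists of $\mathbb{R}^n$ (direct space), $\mathbb{R}^m$ (internal space), the canonical projections $\pi:\mathbb{R}^n\times\mathbb{R}^m\to\mathbb{R}^n$ and $\pi_{\mathrm{int}}:\mathbb{R}^n\times\mathbb{R}^m\to\mathbb{R}^m$, and a lattice $\mathcal{L}\subset\mathbb{R}^{n+m}$ such that $\pi|_{\mathcal{L}}$ is injective and $L^\star := \pi_{\mathrm{int}}(\mathcal{L})$ is dense in $\mathbb{R}^m$. With $L=\pi(\mathcal{L})$, the $\star$-map $L\to L^\star$ is $x^\star = \pi_{\mathrm{int}}((\pi|_{\mathcal{L}})^{-1}(x))$. For a window $W\subset\mathbb{R}^m$, $\curlywedge(W) := \{x\in L \mid x^\star\in W\}$; a (regular) model set is $\varLambda = t+\curlywedge(W)$ with $t\in\mathbb{R}^n$ and $W$ compact, $W=\overline{W^\circ}$ with non-empty interior, and $\partial W$ of Lebesgue measure $0$.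 The covariogram of a compact set $K\subset\mathbb{R}^m$ is $g^{}_K(y) = \mathrm{vol}(K\cap(y+K))$. The autocorrelation of a Delone set $\varLambda\subset\mathbb{R}^n$ is the measure $\gamma^{}_\varLambda = \lim_{r\to\infty} \frac{1}{\mathrm{vol}(B_r)} \delta_{\varLambda\cap B_r} * \delta_{-\varLambda\cap B_r}$ (vague limit), where $B_r$ is the open ball of radius $r$ about $0$ and $\delta_S=\sum_{x\in S}\delta_x$; for model sets this limit exists (and is independent of the averaging van Hove sequence). Two Delone sets are called homometric if they have the same autocorrelation measure. *)

theory Defs
  imports "HOL-Analysis.Analysis"
begin

definition is_lattice :: "'c::euclidean_space set \<Rightarrow> bool" where
  "is_lattice L \<longleftrightarrow> (\<exists>B. independent B \<and> span B = UNIV \<and>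
      L = {(\<Sum>b\<in>B. of_int (c b) *\<^sub>R b) | c. True})"

(* Cut and project scheme with direct space 'a, internal space 'b, lattice L
  in 'a \<times> 'b; \<pi> = fst, \<pi>_int = snd. *)
definition cut_project_scheme :: "('a::euclidean_space \<times> 'b::euclidean_space) set \<Rightarrow> bool" where
  "cut_project_scheme L \<longleftrightarrow> is_lattice L \<and> inj_on fst L \<and> closure (snd ` L) = UNIV"

definition star_map :: "('a \<times> 'b) set \<Rightarrow> 'a \<Rightarrow> 'b" where
  "star_map L x = snd (the_inv_into L fst x)"

definition cp_set :: "('a \<times> 'b) set \<Rightarrow> 'b set \<Rightarrow> 'a set" where
  "cp_set L W = {x \<in> fst ` L. star_map L x \<in> W}"

definition window :: "'b::euclidean_space set \<Rightarrow> bool" where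
  "window W \<longleftrightarrow> compact W \<and> closure (interior W) = W \<and> interior W \<noteq> {} \<and>
      frontier W \<in> null_sets lebesgue"

definition covariogram :: "'b::euclidean_space set \<Rightarrow> 'b \<Rightarrow> real" where
  "covariogram K y = measure lebesgue (K \<inter> ((+) y ` K))"

(* Approximant (1/vol B_r) (\<delta>_{\<Lambda>\<inter>B_r} * \<delta>_{-\<Lambda>\<inter>B_r}) applied to a test function f. *)
definition autocorr_approx :: "'a::euclidean_space set \<Rightarrow> real \<Rightarrow> ('a \<Rightarrow> real) \<Rightarrow> real" where
  "autocorr_approx \<Lambda> r f =
     (\<Sum>x\<in>\<Lambda> \<inter> ball 0 r. \<Sum>y\<in>\<Lambda> \<inter> ball 0 r. f (x - y)) / measure lebesgue (ball (0::'a) r)"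

definition Cc :: "('a::euclidean_space \<Rightarrow> real) set" where
  "Cc = {f. continuous_on UNIV f \<and> compact (closure {x. f x \<noteq> 0})}"

(* \<gamma> (a functional on C_c, i.e. a Radon measure) is the autocorrelation of \<Lambda>:
  vague limit of the approximants as r \<rightarrow> \<infinity>. *)
definition has_autocorrelation :: "'a::euclidean_space set \<Rightarrow> (('a \<Rightarrow> real) \<Rightarrow> real) \<Rightarrow> bool" where
  "has_autocorrelation \<Lambda> \<gamma> \<longleftrightarrow> (\<forall>f\<in>Cc. ((\<lambda>r. autocorr_approx \<Lambda> r f) \<longlongrightarrow> \<gamma> f) at_top)"

definition homometric :: "'a::euclidean_space set \<Rightarrow> 'a set \<Rightarrow> bool" where
  "homometric \<Lambda> \<Lambda>' \<longleftrightarrow> (\<exists>\<gamma>. has_autocorrelation \<Lambda> \<gamma> \<and> has_autocorrelation \<Lambda>' \<gamma>)"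

end

theory Submission
  imports Defs
begin

lemma basis_coords:
  fixes L :: "'c::euclidean_space set"
  assumes "is_lattice L"
  obtains B where "independent B" "span B = UNIV" "finite B"
    "\<And>x. (\<Sum>b\<in>B. representation B x b *\<^sub>R b) = x"
    "\<And>x y b. representation B (x + y) b = representation B x b + representation B y b"
    "\<And>x y b. representation B (x - y) b = representation B x b - representation B y b"
    "\<And>r x b. representation B (r *\<^sub>R x) b = r * representation B x b"
    "\<And>c b. b \<in> B \<Longrightarrow> representation B (\<Sum>b'\<in>B. c b' *\<^sub>R b') b = c b"
    "\<And>x. x \<in> L \<longleftrightarrow> (\<forall>b\<in>B. representation B x b \<in> \<int>)"
proof -
  obtain B where B: "independent B" "span B = UNIV"
     "L = {(\<Sum>b\<in>B. of_int (c b) *\<^sub>R b) | c. True}"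
    using assms unfolding is_lattice_def by blast
  have fin: "finite B" using B(1) by (rule eucl.finiteI_independent)
  have sum_eq: "(\<Sum>b\<in>B. representation B x b *\<^sub>R b) = x" for x
    using B fin by (intro real_vector.sum_representation_eq) auto
  have add: "representation B (x + y) b = representation B x b + representation B y b" for x y b
    using B by (simp add: real_vector.representation_add)
  have diff: "representation B (x - y) b = representation B x b - representation B y b" for x y b
    using B by (simp add: real_vector.representation_diff)
  have scale: "representation B (r *\<^sub>R x) b = r * representation B x b" for r x b
    using B by (simp add: real_vector.representation_scale)
  have coef: "representation B (\<Sum>b'\<in>B. c b' *\<^sub>R b') b = c b" if "b \<in> B" for c b
  proof -
    have "representation B (\<Sum>b'\<in>B. c b' *\<^sub>R b') b = (\<Sum>b'\<in>B. representation B (c b' *\<^sub>R b') b)"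
      using B by (simp add: real_vector.representation_sum)
    also have "\<dots> = (\<Sum>b'\<in>B. c b' * (if b = b' then 1 else 0))"
      using B by (intro sum.cong refl) (simp add: scale real_vector.representation_basis)
    also have "\<dots> = c b" using that fin by (simp add: if_distrib cong: if_cong)
    finally show ?thesis .
  qed
  have mem: "x \<in> L \<longleftrightarrow> (\<forall>b\<in>B. representation B x b \<in> \<int>)" for x
  proof
    assume "x \<in> L"
    then obtain c where "x = (\<Sum>b\<in>B. of_int (c b) *\<^sub>R b)" using B(3) by auto
    then show "\<forall>b\<in>B. representation B x b \<in> \<int>" using coef by auto
  next
    assume h: "\<forall>b\<in>B. representation B x b \<in> \<int>"
    have "x = (\<Sum>b\<in>B. of_int \<lfloor>representation B x b\<rfloor> *\<^sub>R b)"
      by (subst sum_eq[symmetric, of x]) (intro sum.cong refl, use h in auto)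
    then show "x \<in> L" using B(3) by auto
  qed
  show ?thesis by (rule that[OF B(1,2) fin sum_eq add diff scale coef mem])
qed

locale cps =
  fixes L :: "('a::euclidean_space \<times> 'b::euclidean_space) set"
  assumes cps: "cut_project_scheme L"
begin

lemma lat: "is_lattice L" using cps unfolding cut_project_scheme_def by auto
lemma inj: "inj_on fst L" using cps unfolding cut_project_scheme_def by auto
lemma dense_L: "closure (snd ` L) = UNIV" using cps unfolding cut_project_scheme_def by auto

lemma L_group: "0 \<in> L" "x \<in> L \<Longrightarrow> y \<in> L \<Longrightarrow> x + y \<in> L" "x \<in> L \<Longrightarrow> y \<in> L \<Longrightarrow> x - y \<in> L"
    "x \<in> L \<Longrightarrow> - x \<in> L"
proof -
  obtain B where "independent B" "span B = UNIV" "finite B"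
    "\<And>x. (\<Sum>b\<in>B. representation B x b *\<^sub>R b) = x"
    and B: "\<And>x y b. representation B (x + y) b = representation B x b + representation B y b"
    "\<And>x y b. representation B (x - y) b = representation B x b - representation B y b"
    and "\<And>r x b. representation B (r *\<^sub>R x) b = r * representation B x b"
    "\<And>c b. b \<in> B \<Longrightarrow> representation B (\<Sum>b'\<in>B. c b' *\<^sub>R b') b = c b"
    and B3: "\<And>x. x \<in> L \<longleftrightarrow> (\<forall>b\<in>B. representation B x b \<in> \<int>)"
    by (fact basis_coords[OF lat])
  have z: "representation B 0 b = 0" for b using B(2)[of 0 0 b] by simp
  show "0 \<in> L" using B3 z by auto
  show "x \<in> L \<Longrightarrow> y \<in> L \<Longrightarrow> x + y \<in> L" using B B3 by auto
  show "x \<in> L \<Longrightarrow> y \<in> L \<Longrightarrow> x - y \<in> L" using B B3 by auto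
  show "x \<in> L \<Longrightarrow> - x \<in> L" using B(2)[of 0 x] z B3 by auto
qed

lemma fund0:
  obtains F0 R0 where "F0 \<in> sets borel" "\<And>q. q \<in> F0 \<Longrightarrow> norm q \<le> R0"
    "0 < measure lebesgue F0" "\<And>x. \<exists>l\<in>L. x - l \<in> F0"
    "\<And>l l' f f'. l \<in> L \<Longrightarrow> l' \<in> L \<Longrightarrow> f \<in> F0 \<Longrightarrow> f' \<in> F0 \<Longrightarrow> l + f = l' + f' \<Longrightarrow> l = l'"
proof -
  obtain B where B: "independent B" "span B = UNIV" "finite B"
    "\<And>x. (\<Sum>b\<in>B. representation B x b *\<^sub>R b) = x"
    "\<And>x y b. representation B (x + y) b = representation B x b + representation B y b"
    "\<And>x y b. representation B (x - y) b = representation B x b - representation B y b"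
    "\<And>r x b. representation B (r *\<^sub>R x) b = r * representation B x b"
    "\<And>c b. b \<in> B \<Longrightarrow> representation B (\<Sum>b'\<in>B. c b' *\<^sub>R b') b = c b"
    "\<And>x. x \<in> L \<longleftrightarrow> (\<forall>b\<in>B. representation B x b \<in> \<int>)"
    by (fact basis_coords[OF lat])
  define r where "r x b = representation B x b" for x b
  have lin: "linear (\<lambda>x. r x b)" for b
    by (intro linearI) (auto simp: r_def B(5,7))
  have cont: "continuous_on UNIV (\<lambda>x. r x b)" for b
    using lin by (simp add: linear_continuous_on linear_conv_bounded_linear)
  define F0 where "F0 = {x. \<forall>b\<in>B. 0 \<le> r x b \<and> r x b < 1}"
  have meas[measurable]: "(\<lambda>x. r x b) \<in> borel_measurable borel" for b
    using cont by (rule borel_measurable_continuous_onI)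
  have "F0 \<in> sets borel"
  proof -
    have "F0 = {x \<in> space borel. \<forall>b\<in>B. r x b \<in> {0..<1}}" unfolding F0_def by auto
    also have "\<dots> \<in> sets borel"
    proof (rule sets.sets_Collect_finite_All[OF _ B(3)])
      fix b
      have "{x \<in> space borel. r x b \<in> {0..<1}} = (\<lambda>x. r x b) -` {0..<1} \<inter> space borel" by auto
      also have "\<dots> \<in> sets borel" by (rule measurable_sets[OF meas]) auto
      finally show "{x \<in> space borel. r x b \<in> {0..<1}} \<in> sets borel" .
    qed
    finally show ?thesis .
  qed
  moreover have nb: "norm q \<le> (\<Sum>b\<in>B. norm b)" if "q \<in> F0" for q
  proof -
    have "norm q = norm (\<Sum>b\<in>B. r q b *\<^sub>R b)" using B(4) by (simp add: r_def)
    also have "\<dots> \<le> (\<Sum>b\<in>B. norm (r q b *\<^sub>R b))" by (rule norm_sum)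
    also have "\<dots> \<le> (\<Sum>b\<in>B. norm b)"
    proof (intro sum_mono)
      fix b assume "b \<in> B"
      then have "0 \<le> r q b" "r q b < 1" using that unfolding F0_def by auto
      then have "\<bar>r q b\<bar> * norm b \<le> 1 * norm b" by (intro mult_right_mono) auto
      then show "norm (r q b *\<^sub>R b) \<le> norm b" by simp
    qed
    finally show ?thesis .
  qed
  moreover have "0 < measure lebesgue F0"
  proof -
    define Op where "Op = {x. \<forall>b\<in>B. 0 < r x b \<and> r x b < 1}"
    have "open Op"
    proof -
      have "Op = (\<Inter>b\<in>B. (\<lambda>x. r x b) -` {0<..<1})" unfolding Op_def by auto
      moreover have "open ((\<lambda>x. r x b) -` {0<..<1})" for b
        using cont[of b] by (intro open_vimage) auto
      ultimately show ?thesis using B(3) by auto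
    qed
    define p where "p = (\<Sum>b\<in>B. (1/2::real) *\<^sub>R b)"
    have "p \<in> Op" unfolding Op_def
    proof (intro CollectI ballI)
      fix b assume "b \<in> B"
      have "r p b = 1/2" unfolding p_def r_def by (rule B(8)[OF \<open>b \<in> B\<close>, where c="\<lambda>_. 1/2"])
      then show "0 < r p b \<and> r p b < 1" by simp
    qed
    then obtain e where e: "e > 0" "ball p e \<subseteq> Op" using \<open>open Op\<close> open_contains_ball by blast
    have "Op \<subseteq> F0" unfolding Op_def F0_def by auto
    have "0 < measure lebesgue (ball p e)" using content_ball_pos[OF e(1)] by simp
    also have "\<dots> \<le> measure lebesgue F0"
    proof (rule measure_mono_fmeasurable)
      show "ball p e \<subseteq> F0" using e \<open>Op \<subseteq> F0\<close> by auto
      show "ball p e \<in> sets lebesgue" by simp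
      have "bounded F0" unfolding bounded_iff using nb by blast
      then show "F0 \<in> fmeasurable lebesgue"
        using \<open>F0 \<in> sets borel\<close> by (intro bounded_set_imp_lmeasurable) auto
    qed
    finally show ?thesis .
  qed
  moreover have "\<exists>l\<in>L. x - l \<in> F0" for x
  proof
    define l where "l = (\<Sum>b\<in>B. of_int \<lfloor>r x b\<rfloor> *\<^sub>R b)"
    have rl: "r l b = of_int \<lfloor>r x b\<rfloor>" if "b \<in> B" for b
      unfolding l_def r_def using B(8)[OF that, where c="\<lambda>b. of_int \<lfloor>r x b\<rfloor>"] by (simp add: r_def)
    show "l \<in> L" using B(9) rl by (auto simp: r_def)
    show "x - l \<in> F0" unfolding F0_def
    proof (intro CollectI ballI)
      fix b assume "b \<in> B"
      have "r (x - l) b = r x b - of_int \<lfloor>r x b\<rfloor>" using rl[OF \<open>b \<in> B\<close>] by (simp add: r_def B(6))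
      moreover have "of_int \<lfloor>r x b\<rfloor> \<le> r x b" by (rule of_int_floor_le)
      moreover have "r x b < of_int \<lfloor>r x b\<rfloor> + 1" by (metis floor_correct of_int_1 of_int_add)
      ultimately show "0 \<le> r (x - l) b \<and> r (x - l) b < 1" by linarith
    qed
  qed
  moreover have "l = l'" if "l \<in> L" "l' \<in> L" "f \<in> F0" "f' \<in> F0" "l + f = l' + f'" for l l' f f'
  proof -
    have "r l b = r l' b" if b: "b \<in> B" for b
    proof -
      have "r l b + r f b = r l' b + r f' b" using \<open>l + f = l' + f'\<close> B(5) r_def by metis
      moreover obtain i where i: "r l b = of_int i" using \<open>l \<in> L\<close> B(9) b r_def Ints_cases by metis
      moreover obtain j where j: "r l' b = of_int j" using \<open>l' \<in> L\<close> B(9) b r_def Ints_cases by metis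
      moreover have "0 \<le> r f b" "r f b < 1" "0 \<le> r f' b" "r f' b < 1"
        using \<open>f \<in> F0\<close> \<open>f' \<in> F0\<close> b unfolding F0_def by auto
      ultimately have "\<bar>of_int i - of_int j\<bar> < (1::real)" by linarith
      then have "i = j" by linarith
      then show ?thesis using i j by simp
    qed
    then show ?thesis using B(4)[of l] B(4)[of l'] unfolding r_def
      by (metis (no_types, lifting) sum.cong)
  qed
  ultimately show ?thesis by (rule that)
qed

end


lemma borel_leb: "A \<in> sets borel \<Longrightarrow> A \<in> sets lebesgue"
  using lebesgue_measurable_vimage_borel[of "\<lambda>x. x" A] by simp

lemma measure_lebesgue_Times:
  fixes A :: "'a::euclidean_space set" and B :: "'b::euclidean_space set"
  assumes "A \<in> sets borel" "B \<in> sets borel"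
  shows "measure lebesgue (A \<times> B) = measure lebesgue A * measure lebesgue B"
proof -
  have AB: "A \<times> B \<in> sets borel"
    using assms by (metis borel_prod pair_measureI)
  have "measure lebesgue (A \<times> B) = measure lborel (A \<times> B)"
    using AB by (simp add: measure_completion)
  also have "\<dots> = measure (lborel \<Otimes>\<^sub>M lborel) (A \<times> B)" by (simp add: lborel_prod)
  also have "\<dots> = measure lborel A * measure lborel B"
    using assms by (simp add: measure_def lborel.emeasure_pair_measure_Times enn2real_mult)
  also have "\<dots> = measure lebesgue A * measure lebesgue B"
    using assms by (simp add: measure_completion)
  finally show ?thesis .
qed

lemma ball_vol:
  fixes s :: "'a::euclidean_space"
  shows "measure lebesgue (ball s r) = (if r \<le> 0 then 0 else r ^ DIM('a) * measure lebesgue (ball (0::'a) 1))"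
proof (cases "r \<le> 0")
  case True then show ?thesis by simp
next
  case False
  then show ?thesis using content_ball_conv_unit_ball[of r s]
    by (simp add: measure_completion)
qed

lemma ball_vol_pos: "0 < measure lebesgue (ball (0::'a::euclidean_space) 1)"
  using content_ball_pos[of 1 "0::'a"] by (simp add: measure_completion)

lemma ball_ratio:
  "((\<lambda>r. measure lebesgue (ball (s::'a::euclidean_space) (r + b)) / measure lebesgue (ball (0::'a) r)) \<longlongrightarrow> 1) at_top"
proof -
  have ev: "eventually (\<lambda>r. (1 + b / r) ^ DIM('a) =
      measure lebesgue (ball s (r + b)) / measure lebesgue (ball (0::'a) r)) at_top"
    using eventually_gt_at_top[of "\<bar>b\<bar>"]
  proof (rule eventually_mono)
    fix r :: real assume r: "\<bar>b\<bar> < r"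
    then have "r > 0" "r + b > 0" by linarith+
    have "(1 + b / r) ^ DIM('a) = (r + b) ^ DIM('a) / r ^ DIM('a)"
    proof -
      have "1 + b / r = (r + b) / r" using \<open>r > 0\<close> by (simp add: field_simps)
      then show ?thesis by (simp add: power_divide)
    qed
    also have "\<dots> = measure lebesgue (ball s (r + b)) / measure lebesgue (ball (0::'a) r)"
    proof -
      define U where "U = measure lebesgue (ball (0::'a) 1)"
      have U: "U > 0" unfolding U_def by (rule ball_vol_pos)
      have 1: "measure lebesgue (ball s (r + b)) = (r + b) ^ DIM('a) * U"
        using ball_vol[of s "r + b"] \<open>r + b > 0\<close> unfolding U_def by simp
      have 2: "measure lebesgue (ball (0::'a) r) = r ^ DIM('a) * U"
        using ball_vol[of "0::'a" r] \<open>r > 0\<close> unfolding U_def by simp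
      show ?thesis unfolding 1 2 using U by simp
    qed
    finally show "(1 + b / r) ^ DIM('a) = measure lebesgue (ball s (r + b)) / measure lebesgue (ball (0::'a) r)" .
  qed
  have "((\<lambda>r. b / r) \<longlongrightarrow> 0) at_top"
    by (intro tendsto_divide_0[OF tendsto_const] filterlim_at_top_imp_at_infinity filterlim_ident)
  then have "((\<lambda>r::real. (1 + b / r) ^ DIM('a)) \<longlongrightarrow> (1 + 0) ^ DIM('a)) at_top"
    by (intro tendsto_intros)
  then have "((\<lambda>r::real. (1 + b / r) ^ DIM('a)) \<longlongrightarrow> 1) at_top" by simp
  then show ?thesis using ev by (rule Lim_transform_eventually)
qed

definition outer :: "'b::euclidean_space set \<Rightarrow> real \<Rightarrow> 'b set" where
  "outer V e = (\<Union>w\<in>V. ball w e)"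
definition inner :: "'b::euclidean_space set \<Rightarrow> real \<Rightarrow> 'b set" where
  "inner V e = {v. ball v e \<subseteq> V}"

lemma inner_eq: "inner V e = - (\<Union>u\<in>-V. ball u e)"
  unfolding inner_def by (auto simp: dist_commute)

lemma approx:
  fixes V :: "'b::euclidean_space set"
  assumes "compact V" "frontier V \<in> null_sets lebesgue" "\<delta> > 0"
  shows "\<exists>e>0. measure lebesgue (outer V e) \<le> measure lebesgue V + \<delta> \<and>
              measure lebesgue V - \<delta> \<le> measure lebesgue (inner V e)"
proof -
  define A where "A k = outer V (1 / Suc k)" for k :: nat
  define A' where "A' k = inner V (1 / Suc k)" for k :: nat
  have bV: "bounded V" using assms(1) compact_imp_bounded by blast
  have clV: "closed V" using assms(1) compact_imp_closed by blast
  have Aopen: "open (A k)" for k unfolding A_def outer_def by auto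
  have Abd: "bounded (A k)" for k
  proof -
    obtain M where M: "\<forall>x\<in>V. norm x \<le> M" using bV bounded_iff by blast
    have "norm y \<le> M + 1" if yA: "y \<in> A k" for y
    proof -
      obtain w where w: "w \<in> V" "dist w y < 1 / Suc k" using yA unfolding A_def outer_def by auto
      have "1 / real (Suc k) \<le> 1" by (simp add: field_simps)
      then have "dist w y < 1" using w(2) by linarith
      then have "norm (y - w) \<le> 1" by (simp add: dist_norm norm_minus_commute)
      moreover have "norm w \<le> M" using M w(1) by blast
      ultimately show ?thesis using norm_triangle_sub[of y w] by linarith
    qed
    then show ?thesis unfolding bounded_iff by blast
  qed
  have Aclosed: "closed (A' k)" for k unfolding A'_def inner_eq by auto
  have A'sub: "A' k \<subseteq> interior V" for k
  proof
    fix v assume "v \<in> A' k"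
    then have "ball v (1/Suc k) \<subseteq> V" by (simp add: A'_def inner_def)
    moreover have "v \<in> ball v (1/Suc k)" by simp
    ultimately show "v \<in> interior V" using interior_maximal[OF _ open_ball] by blast
  qed
  have decA: "antimono_on UNIV A"
    unfolding decseq_def A_def outer_def
  proof (intro allI impI, clarsimp)
    fix m n :: nat and x w assume "m \<le> n" "w \<in> V" "dist w x < 1 / (1 + real n)"
    moreover have "1 / (1 + real n) \<le> 1 / (1 + real m)" using \<open>m \<le> n\<close> by (simp add: frac_le)
    ultimately show "\<exists>w\<in>V. dist w x < 1 / (1 + real m)" by force
  qed
  have incA: "incseq A'"
    unfolding incseq_def A'_def inner_def
  proof (intro allI impI, clarsimp)
    fix m n :: nat and v x assume "m \<le> n" "ball v (1 / (1 + real m)) \<subseteq> V" "dist v x < 1 / (1 + real n)"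
    moreover have "1 / (1 + real n) \<le> 1 / (1 + real m)" using \<open>m \<le> n\<close> by (simp add: frac_le)
    ultimately show "x \<in> V" by auto
  qed
  have interA: "(\<Inter>k. A k) = V"
  proof
    show "V \<subseteq> (\<Inter>k. A k)" unfolding A_def outer_def by force
    show "(\<Inter>k. A k) \<subseteq> V"
    proof
      fix x assume x: "x \<in> (\<Inter>k. A k)"
      have "x \<in> closure V"
        unfolding closure_approachable
      proof (intro allI impI)
        fix e :: real assume "e > 0"
        then obtain k where k: "1 / Suc k < e" using nat_approx_posE by blast
        then obtain w where "w \<in> V" "dist w x < 1 / Suc k" using x unfolding A_def outer_def by auto
        then show "\<exists>y\<in>V. dist y x < e" using k by force
      qed
      then show "x \<in> V" using clV by (simp add: closure_closed)
    qed
  qed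
  have unionA: "(\<Union>k. A' k) = interior V"
  proof
    show "(\<Union>k. A' k) \<subseteq> interior V" using A'sub by blast
    show "interior V \<subseteq> (\<Union>k. A' k)"
    proof
      fix x assume "x \<in> interior V"
      then obtain e where e: "e > 0" "ball x e \<subseteq> V" using open_contains_ball_eq open_interior interior_subset
        by (metis subset_trans)
      then obtain k where k: "1 / Suc k < e" using nat_approx_posE by blast
      then have "ball x (1 / Suc k) \<subseteq> V" using e by (meson less_imp_le order_trans subset_ball)
      then show "x \<in> (\<Union>k. A' k)" unfolding A'_def inner_def by blast
    qed
  qed
  have lim1: "(\<lambda>k. measure lebesgue (A k)) \<longlonglongrightarrow> measure lebesgue V"
  proof -
    have "(\<lambda>k. measure lebesgue (A k)) \<longlonglongrightarrow> measure lebesgue (\<Inter>k. A k)"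
    proof (rule Lim_measure_decseq)
      show "range A \<subseteq> sets lebesgue" using Aopen by (auto intro: borel_leb borel_open)
      show "antimono_on UNIV A" by (rule decA)
      show "emeasure lebesgue (A k) \<noteq> \<infinity>" for k
        using fmeasurableD2[OF lmeasurable_open[OF Abd Aopen]] by simp
    qed
    then show ?thesis using interA by simp
  qed
  have lim2: "(\<lambda>k. measure lebesgue (A' k)) \<longlonglongrightarrow> measure lebesgue V"
  proof -
    have "(\<lambda>k. measure lebesgue (A' k)) \<longlonglongrightarrow> measure lebesgue (\<Union>k. A' k)"
    proof (rule Lim_measure_incseq)
      show "range A' \<subseteq> sets lebesgue" using Aclosed by (auto intro: borel_leb borel_closed)
      show "incseq A'" by (rule incA)
      show "emeasure lebesgue (\<Union>k. A' k) \<noteq> \<infinity>"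
        unfolding unionA using fmeasurableD2[OF lmeasurable_interior[OF bV]] by simp
    qed
    moreover have "measure lebesgue (interior V) = measure lebesgue V"
      using measure_interior[OF bV] assms(2) by (simp add: negligible_iff_null_sets)
    ultimately show ?thesis using unionA by simp
  qed
  have "eventually (\<lambda>k. measure lebesgue (A k) < measure lebesgue V + \<delta>) sequentially"
    using lim1 assms(3) by (intro order_tendstoD) auto
  moreover have "eventually (\<lambda>k. measure lebesgue V - \<delta> < measure lebesgue (A' k)) sequentially"
    using lim2 assms(3) by (intro order_tendstoD) auto
  ultimately have "eventually (\<lambda>k. measure lebesgue (A k) < measure lebesgue V + \<delta> \<and>
      measure lebesgue V - \<delta> < measure lebesgue (A' k)) sequentially"
    by (rule eventually_conj)
  then obtain N where N: "\<forall>n\<ge>N. measure lebesgue (A n) < measure lebesgue V + \<delta> \<and>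
      measure lebesgue V - \<delta> < measure lebesgue (A' n)"
    unfolding eventually_sequentially by blast
  then have k: "measure lebesgue (A N) < measure lebesgue V + \<delta>"
      "measure lebesgue V - \<delta> < measure lebesgue (A' N)" by auto
  show ?thesis
    by (rule exI[of _ "1 / Suc N"]) (use k in \<open>auto simp: A_def A'_def\<close>)
qed



lemma count_upper:
  fixes F :: "'c::euclidean_space set"
  assumes F: "F \<in> sets lebesgue" "bounded F" "measure lebesgue F = c"
    and uniq: "\<And>l l' f f'. l \<in> S \<Longrightarrow> l' \<in> S \<Longrightarrow> f \<in> F \<Longrightarrow> f' \<in> F \<Longrightarrow> l + f = l' + f' \<Longrightarrow> l = l'"
    and S: "finite S" and sub: "\<And>l. l \<in> S \<Longrightarrow> (+) l ` F \<subseteq> Q" and Q: "Q \<in> fmeasurable lebesgue"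
  shows "real (card S) * c \<le> measure lebesgue Q"
proof -
  have fm: "(+) l ` F \<in> fmeasurable lebesgue" for l
    by (intro bounded_set_imp_lmeasurable bounded_translation lebesgue_sets_translation F)
  have "measure lebesgue (\<Union>l\<in>S. (+) l ` F) = (\<Sum>l\<in>S. measure lebesgue ((+) l ` F))"
  proof (rule measure_UNION'[OF S fm])
    show "pairwise (\<lambda>i j. disjnt ((+) i ` F) ((+) j ` F)) S"
      unfolding pairwise_def disjnt_def using uniq by blast
  qed
  also have "\<dots> = real (card S) * c" using F(3) by (simp add: measure_translation)
  finally have eq: "measure lebesgue (\<Union>l\<in>S. (+) l ` F) = real (card S) * c" .
  have "measure lebesgue (\<Union>l\<in>S. (+) l ` F) \<le> measure lebesgue Q"
  proof (rule measure_mono_fmeasurable[OF _ _ Q])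
    show "(\<Union>l\<in>S. (+) l ` F) \<subseteq> Q" using sub by blast
    show "(\<Union>l\<in>S. (+) l ` F) \<in> sets lebesgue"
      using fm S by (intro sets.finite_UN) (auto simp: fmeasurable_def)
  qed
  then show ?thesis using eq by simp
qed

lemma count_lower:
  fixes F :: "'c::euclidean_space set"
  assumes F: "F \<in> sets lebesgue" "bounded F" "measure lebesgue F = c"
    and S: "finite S" and sub: "Q \<subseteq> (\<Union>l\<in>S. (+) l ` F)" and Q: "Q \<in> sets lebesgue"
  shows "measure lebesgue Q \<le> real (card S) * c"
proof -
  have fm: "(+) l ` F \<in> fmeasurable lebesgue" for l
    by (intro bounded_set_imp_lmeasurable bounded_translation lebesgue_sets_translation F)
  have U: "(\<Union>l\<in>S. (+) l ` F) \<in> fmeasurable lebesgue"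
  proof (rule bounded_set_imp_lmeasurable)
    show "bounded (\<Union>l\<in>S. (+) l ` F)" using S F(2) by (auto intro: bounded_translation)
    show "(\<Union>l\<in>S. (+) l ` F) \<in> sets lebesgue"
      using fm S by (intro sets.finite_UN) (auto simp: fmeasurable_def)
  qed
  have "measure lebesgue Q \<le> measure lebesgue (\<Union>l\<in>S. (+) l ` F)"
    by (rule measure_mono_fmeasurable[OF sub Q U])
  also have "\<dots> \<le> (\<Sum>l\<in>S. measure lebesgue ((+) l ` F))"
    using fm S by (intro measure_UNION_le) (auto simp: fmeasurable_def)
  also have "\<dots> = real (card S) * c" using F(3) by (simp add: measure_translation)
  finally show ?thesis .
qed

context cps
begin

lemma thin_domain:
  obtains c where "c > 0" "\<And>\<epsilon>. \<epsilon> > 0 \<Longrightarrow> \<exists>F R. F \<in> sets lebesgue \<and> bounded F \<and> measure lebesgue F = c \<and>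
      (\<forall>q\<in>F. norm (fst q) \<le> R \<and> norm (snd q) < \<epsilon>) \<and> (\<forall>x. \<exists>l\<in>L. x - l \<in> F) \<and>
      (\<forall>l\<in>L. \<forall>l'\<in>L. \<forall>f\<in>F. \<forall>f'\<in>F. l + f = l' + f' \<longrightarrow> l = l')"
proof -
  obtain F0 R0 where F0: "F0 \<in> sets borel" "\<And>q. q \<in> F0 \<Longrightarrow> norm q \<le> R0"
    "0 < measure lebesgue F0" "\<And>x. \<exists>l\<in>L. x - l \<in> F0"
    "\<And>l l' f f'. l \<in> L \<Longrightarrow> l' \<in> L \<Longrightarrow> f \<in> F0 \<Longrightarrow> f' \<in> F0 \<Longrightarrow> l + f = l' + f' \<Longrightarrow> l = l'"
    by (fact fund0)
  have bF0: "bounded F0" unfolding bounded_iff using F0(2) by blast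
  show ?thesis
  proof (rule that[of "measure lebesgue F0"])
    show "0 < measure lebesgue F0" by (rule F0(3))
    fix \<epsilon> :: real assume "\<epsilon> > 0"
    define Ob where "Ob l = (snd -` ball (snd l) \<epsilon> :: ('a \<times> 'b) set)" for l :: "'a \<times> 'b"
    have Ob_iff: "q \<in> Ob l \<longleftrightarrow> dist (snd l) (snd q) < \<epsilon>" for q l :: "'a \<times> 'b" by (simp add: Ob_def)
    have Ob_open: "open (Ob l)" for l :: "'a \<times> 'b"
      unfolding Ob_def by (intro open_vimage open_ball continuous_on_snd continuous_on_id)
    have cov: "closure F0 \<subseteq> \<Union> (Ob ` L)"
    proof
      fix q :: "'a \<times> 'b" assume "q \<in> closure F0"
      have "snd q \<in> closure (snd ` L)" using dense_L by simp
      then obtain y where "y \<in> snd ` L" "dist y (snd q) < \<epsilon>"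
        using \<open>\<epsilon> > 0\<close> unfolding closure_approachable by blast
      then obtain l where "l \<in> L" "dist (snd l) (snd q) < \<epsilon>" by auto
      then show "q \<in> \<Union> (Ob ` L)" using Ob_iff by blast
    qed
    have "compact (closure F0)" using bF0 by (simp add: compact_closure)
    then obtain K where K: "K \<subseteq> L" "finite K" "closure F0 \<subseteq> \<Union> (Ob ` K)"
      using compactE_image[of "closure F0" L Ob] Ob_open cov by metis
    obtain ks where ks: "set ks = K" using finite_list[OF K(2)] by blast
    define n where "n = length ks"
    define k where "k i = ks ! i" for i
    define P where "P i = F0 \<inter> Ob (k i) - (\<Union>j<i. Ob (k j))" for i
    define F where "F = (\<Union>i<n. (+) (- k i) ` P i)"
    define R where "R = R0 + (\<Sum>l\<in>K. norm (fst l))"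
    have kL: "k i \<in> L" if "i < n" for i using that K(1) ks nth_mem unfolding k_def n_def by blast
    have kK: "k i \<in> K" if "i < n" for i using that ks nth_mem unfolding k_def n_def by blast
    have PF0: "P i \<subseteq> F0" for i unfolding P_def by blast
    have Pcov: "\<exists>i<n. q \<in> P i" if "q \<in> F0" for q
    proof -
      have "q \<in> \<Union> (Ob ` K)" using K(3) closure_subset that by blast
      then obtain l where "l \<in> K" "q \<in> Ob l" by blast
      then obtain j where j: "j < n" "q \<in> Ob (k j)" using ks unfolding k_def n_def
        by (metis in_set_conv_nth)
      define i where "i = (LEAST i. i < n \<and> q \<in> Ob (k i))"
      have i: "i < n \<and> q \<in> Ob (k i)" unfolding i_def
        by (rule LeastI[of "\<lambda>i. i < n \<and> q \<in> Ob (k i)" j]) (use j in blast)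
      have "q \<notin> Ob (k j')" if "j' < i" for j'
        using not_less_Least[of j' "\<lambda>i. i < n \<and> q \<in> Ob (k i)", folded i_def] that i by auto
      then have "q \<in> P i" unfolding P_def using i \<open>q \<in> F0\<close> by blast
      then show ?thesis using i by blast
    qed
    have Pdisj: "i = j" if "q \<in> P i" "q \<in> P j" for q i j
    proof (rule ccontr)
      assume "i \<noteq> j"
      then consider "i < j" | "j < i" by linarith
      then show False
      proof cases
        case 1 then show False using that unfolding P_def by blast
      next
        case 2 then show False using that unfolding P_def by blast
      qed
    qed
    have Pborel: "P i \<in> sets borel" for i
    proof -
      have Obb: "Ob l \<in> sets borel" for l using Ob_open borel_open by blast
      show ?thesis unfolding P_def using F0(1) Obb by (intro sets.Diff sets.Int sets.finite_UN) auto
    qed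
    have Pfm: "P i \<in> fmeasurable lebesgue" for i
      by (rule bounded_set_imp_lmeasurable[OF bounded_subset[OF bF0 PF0] borel_leb[OF Pborel]])
    have tfm: "(+) (- k i) ` P i \<in> fmeasurable lebesgue" for i
      by (intro bounded_set_imp_lmeasurable bounded_translation lebesgue_sets_translation
          bounded_subset[OF bF0 PF0] borel_leb[OF Pborel])
    have Fbound: "norm (fst q) \<le> R \<and> norm (snd q) < \<epsilon>" if "q \<in> F" for q
    proof -
      obtain i p where ip: "i < n" "p \<in> P i" "q = - k i + p" using \<open>q \<in> F\<close> unfolding F_def by blast
      have "p \<in> F0" using PF0 ip(2) by blast
      then have "norm p \<le> R0" by (rule F0(2))
      moreover have "norm (fst p) \<le> norm p" using norm_fst_le[of "fst p" "snd p"] by simp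
      ultimately have "norm (fst p) \<le> R0" by linarith
      moreover have "norm (fst (k i)) \<le> (\<Sum>l\<in>K. norm (fst l))"
        using kK[OF ip(1)] K(2) by (intro member_le_sum) auto
      moreover have "fst q = fst p - fst (k i)" using ip(3) by simp
      moreover have "norm (fst q) \<le> norm (fst p) + norm (fst (k i))"
        using \<open>fst q = fst p - fst (k i)\<close> norm_triangle_ineq4[of "fst p" "fst (k i)"] by simp
      ultimately have "norm (fst q) \<le> R" unfolding R_def by linarith
      moreover have "norm (snd q) < \<epsilon>"
      proof -
        have "p \<in> Ob (k i)" using ip(2) unfolding P_def by blast
        then have "dist (snd (k i)) (snd p) < \<epsilon>" using Ob_iff by blast
        moreover have "snd q = snd p - snd (k i)" using ip(3) by simp
        ultimately show ?thesis by (simp add: dist_norm norm_minus_commute)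
      qed
      ultimately show ?thesis by blast
    qed
    have Fcov: "\<exists>l\<in>L. x - l \<in> F" for x
    proof -
      obtain l0 where l0: "l0 \<in> L" "x - l0 \<in> F0" using F0(4) by blast
      obtain i where i: "i < n" "x - l0 \<in> P i" using Pcov[OF l0(2)] by blast
      have "l0 + k i \<in> L" using l0(1) kL[OF i(1)] L_group by blast
      moreover have "x - (l0 + k i) = - k i + (x - l0)" by (simp add: algebra_simps)
      then have "x - (l0 + k i) \<in> F" unfolding F_def using i by blast
      ultimately show ?thesis by blast
    qed
    have Funiq: "l = l'" if "l \<in> L" "l' \<in> L" "f \<in> F" "f' \<in> F" "l + f = l' + f'" for l l' f f'
    proof -
      obtain i p where ip: "i < n" "p \<in> P i" "f = - k i + p" using \<open>f \<in> F\<close> unfolding F_def by blast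
      obtain j p' where jp: "j < n" "p' \<in> P j" "f' = - k j + p'" using \<open>f' \<in> F\<close> unfolding F_def by blast
      have eq: "(l - k i) + p = (l' - k j) + p'" using that(5) ip(3) jp(3) by (simp add: algebra_simps)
      have "l - k i \<in> L" "l' - k j \<in> L" using that(1,2) kL ip(1) jp(1) L_group by blast+
      then have 1: "l - k i = l' - k j" using F0(5) eq PF0 ip(2) jp(2) by blast
      then have "p = p'" using eq by simp
      then have "i = j" using Pdisj ip(2) jp(2) by blast
      then show ?thesis using 1 by simp
    qed
    have bF: "bounded F"
    proof -
      have "norm q \<le> R + \<epsilon>" if "q \<in> F" for q
        using Fbound[OF that] norm_Pair_le[of "fst q" "snd q"] by simp
      then show ?thesis unfolding bounded_iff by blast
    qed
    have Fleb: "F \<in> sets lebesgue"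
      unfolding F_def using tfm by (intro sets.finite_UN) (auto simp: fmeasurable_def)
    have "measure lebesgue F = (\<Sum>i<n. measure lebesgue ((+) (- k i) ` P i))"
      unfolding F_def
    proof (rule measure_UNION')
      show "pairwise (\<lambda>i j. disjnt ((+) (- k i) ` P i) ((+) (- k j) ` P j)) {..<n}"
      proof (unfold pairwise_def disjnt_def, intro ballI impI equalityI subsetI)
        fix i j x assume ij: "i \<in> {..<n}" "j \<in> {..<n}" "i \<noteq> j" "x \<in> (+) (- k i) ` P i \<inter> (+) (- k j) ` P j"
        then obtain p p' where pp: "p \<in> P i" "p' \<in> P j" "- k i + p = - k j + p'" by auto
        have "- k i \<in> L" "- k j \<in> L" using kL ij L_group by auto
        then have "- k i = - k j" using F0(5) pp PF0 by blast
        then have "p = p'" using pp(3) by simp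
        then show "x \<in> {}" using Pdisj pp ij by blast
      qed simp
    qed (use tfm in auto)
    also have "\<dots> = (\<Sum>i<n. measure lebesgue (P i))" by (simp add: measure_translation measure_translation_subtract)
    also have "\<dots> = measure lebesgue (\<Union>i<n. P i)"
    proof (rule measure_UNION'[symmetric])
      show "pairwise (\<lambda>i j. disjnt (P i) (P j)) {..<n}"
        unfolding pairwise_def disjnt_def using Pdisj by blast
    qed (use Pfm in auto)
    also have "(\<Union>i<n. P i) = F0" using Pcov PF0 by blast
    finally have mF: "measure lebesgue F = measure lebesgue F0" .
    show "\<exists>F R. F \<in> sets lebesgue \<and> bounded F \<and> measure lebesgue F = measure lebesgue F0 \<and>
      (\<forall>q\<in>F. norm (fst q) \<le> R \<and> norm (snd q) < \<epsilon>) \<and> (\<forall>x. \<exists>l\<in>L. x - l \<in> F) \<and>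
      (\<forall>l\<in>L. \<forall>l'\<in>L. \<forall>f\<in>F. \<forall>f'\<in>F. l + f = l' + f' \<longrightarrow> l = l')"
      using Fleb bF mF Fbound Fcov Funiq by blast
  qed
qed

end


lemma squeeze:
  fixes X :: "real \<Rightarrow> real"
  assumes c: "c > 0" and mu: "\<mu> \<ge> 0"
    and H: "\<And>\<delta>. \<delta> > 0 \<Longrightarrow> \<delta> \<le> 1 \<Longrightarrow>
       eventually (\<lambda>r. (1 - \<delta>) * (\<mu> - \<delta>) / c \<le> X r \<and> X r \<le> (1 + \<delta>) * (\<mu> + \<delta>) / c) at_top"
  shows "(X \<longlongrightarrow> \<mu> / c) at_top"
proof (rule tendstoI)
  fix \<eta> :: real assume "\<eta> > 0"
  define \<delta> where "\<delta> = min 1 (\<eta> * c / (2 * (\<mu> + 2)))"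
  have d0: "\<delta> > 0" unfolding \<delta>_def using \<open>\<eta> > 0\<close> c mu by auto
  have d1: "\<delta> \<le> 1" unfolding \<delta>_def by auto
  have "\<delta> \<le> \<eta> * c / (2 * (\<mu> + 2))" unfolding \<delta>_def by auto
  then have C: "\<delta> * (\<mu> + 2) \<le> \<eta> * c / 2" using mu by (simp add: field_simps)
  have dd: "\<delta> * \<delta> \<le> \<delta>" using d0 d1 by (simp add: mult_le_cancel_left1)
  have A: "(1 + \<delta>) * (\<mu> + \<delta>) \<le> \<mu> + \<delta> * (\<mu> + 2)"
  proof -
    have "(1 + \<delta>) * (\<mu> + \<delta>) = \<mu> + \<delta> * (\<mu> + 1) + \<delta> * \<delta>" by (simp add: algebra_simps)
    then show ?thesis using dd by (simp add: algebra_simps)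
  qed
  have B: "\<mu> - \<delta> * (\<mu> + 2) \<le> (1 - \<delta>) * (\<mu> - \<delta>)"
  proof -
    have "(1 - \<delta>) * (\<mu> - \<delta>) = \<mu> - \<delta> * (\<mu> + 1) + \<delta> * \<delta>" by (simp add: algebra_simps)
    moreover have "0 \<le> \<delta> * \<delta>" by simp
    ultimately show ?thesis using d0 by (simp add: algebra_simps)
  qed
  have E: "\<delta> * (\<mu> + 2) / c \<le> \<eta> / 2" using C c by (simp add: field_simps)
  show "eventually (\<lambda>r. dist (X r) (\<mu> / c) < \<eta>) at_top"
    using H[OF d0 d1]
  proof (rule eventually_mono)
    fix r assume r: "(1 - \<delta>) * (\<mu> - \<delta>) / c \<le> X r \<and> X r \<le> (1 + \<delta>) * (\<mu> + \<delta>) / c"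
    have "X r \<le> (\<mu> + \<delta> * (\<mu> + 2)) / c" using r A c by (meson divide_right_mono less_imp_le order_trans)
    also have "\<dots> = \<mu> / c + \<delta> * (\<mu> + 2) / c" by (simp add: add_divide_distrib)
    finally have up: "X r \<le> \<mu> / c + \<delta> * (\<mu> + 2) / c" .
    have "(\<mu> - \<delta> * (\<mu> + 2)) / c \<le> X r" using r B c by (meson divide_right_mono less_imp_le order_trans)
    moreover have "(\<mu> - \<delta> * (\<mu> + 2)) / c = \<mu> / c - \<delta> * (\<mu> + 2) / c" by (simp add: diff_divide_distrib)
    ultimately have lo: "\<mu> / c - \<delta> * (\<mu> + 2) / c \<le> X r" by simp
    show "dist (X r) (\<mu> / c) < \<eta>"
      using up lo E \<open>\<eta> > 0\<close> unfolding dist_real_def abs_less_iff by linarith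
  qed
qed

lemma times_borel:
  fixes A :: "'a::euclidean_space set" and B :: "'b::euclidean_space set"
  assumes "A \<in> sets borel" "B \<in> sets borel"
  shows "A \<times> B \<in> sets borel"
  using assms by (metis borel_prod pair_measureI)

lemma outer_bounded:
  fixes V :: "'b::euclidean_space set"
  assumes "bounded V" shows "bounded (outer V e)"
proof -
  obtain M where M: "\<forall>x\<in>V. norm x \<le> M" using assms bounded_iff by blast
  have "norm y \<le> M + \<bar>e\<bar>" if yA: "y \<in> outer V e" for y
  proof -
    obtain w where w: "w \<in> V" "dist w y < e" using yA unfolding outer_def by auto
    then have "norm (y - w) \<le> \<bar>e\<bar>" by (simp add: dist_norm norm_minus_commute)
    moreover have "norm w \<le> M" using M w(1) by blast
    ultimately show ?thesis using norm_triangle_sub[of y w] by linarith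
  qed
  then show ?thesis unfolding bounded_iff by blast
qed

lemma outer_open: "open (outer V e)" unfolding outer_def by auto
lemma inner_closed: "closed (inner V e)" unfolding inner_eq by auto
lemma inner_sub: "e > 0 \<Longrightarrow> inner V e \<subseteq> V" unfolding inner_def by auto

locale cpsc = cps L for L :: "('a::euclidean_space \<times> 'b::euclidean_space) set" +
  fixes c :: real
  assumes c_pos: "c > 0"
  and thin: "\<And>\<epsilon>. \<epsilon> > 0 \<Longrightarrow> \<exists>F R. F \<in> sets lebesgue \<and> bounded F \<and> measure lebesgue F = c \<and>
      (\<forall>q\<in>F. norm (fst q) \<le> R \<and> norm (snd q) < \<epsilon>) \<and> (\<forall>x. \<exists>l\<in>L. x - l \<in> F) \<and>
      (\<forall>l\<in>L. \<forall>l'\<in>L. \<forall>f\<in>F. \<forall>f'\<in>F. l + f = l' + f' \<longrightarrow> l = l')"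
begin

lemma finite_bounded:
  assumes "bounded S"
  shows "finite {l\<in>L. l \<in> S}"
proof (rule ccontr)
  assume inf: "infinite {l\<in>L. l \<in> S}"
  obtain F R where F: "F \<in> sets lebesgue" "bounded F" "measure lebesgue F = c"
    "\<forall>l\<in>L. \<forall>l'\<in>L. \<forall>f\<in>F. \<forall>f'\<in>F. l + f = l' + f' \<longrightarrow> l = l'"
    using thin[of 1] by auto
  obtain M where M: "\<forall>x\<in>S. norm x \<le> M" using assms bounded_iff by blast
  obtain M' where M': "\<forall>x\<in>F. norm x \<le> M'" using F(2) bounded_iff by blast
  define Q where "Q = cball (0::'a \<times> 'b) (M + M')"
  have Q: "Q \<in> fmeasurable lebesgue" unfolding Q_def by simp
  define N where "N = nat \<lceil>measure lebesgue Q / c\<rceil> + 1"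
  obtain T where T: "finite T" "card T = N" "T \<subseteq> {l\<in>L. l \<in> S}"
    using infinite_arbitrarily_large[OF inf] by blast
  have "real (card T) * c \<le> measure lebesgue Q"
  proof (rule count_upper[OF F(1-3) _ T(1) _ Q])
    show "\<And>l l' f f'. l \<in> T \<Longrightarrow> l' \<in> T \<Longrightarrow> f \<in> F \<Longrightarrow> f' \<in> F \<Longrightarrow> l + f = l' + f' \<Longrightarrow> l = l'"
      using F(4) T(3) by blast
    fix l assume "l \<in> T"
    then have "norm l \<le> M" using T(3) M by blast
    show "(+) l ` F \<subseteq> Q"
    proof
      fix x assume "x \<in> (+) l ` F"
      then obtain f where "f \<in> F" "x = l + f" by blast
      then have "norm x \<le> norm l + norm f" using norm_triangle_ineq by blast
      then show "x \<in> Q" unfolding Q_def using \<open>norm l \<le> M\<close> M' \<open>f \<in> F\<close> by fastforce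
    qed
  qed
  moreover have "measure lebesgue Q / c < real N" unfolding N_def by linarith
  then have "measure lebesgue Q < real N * c" using c_pos by (simp add: field_simps)
  ultimately show False using T(2) by simp
qed

lemma finite_cnt:
  assumes "bounded V"
  shows "finite {l\<in>L. snd l \<in> V \<and> fst l \<in> ball s \<rho>}"
proof -
  have "bounded (ball s \<rho> \<times> V)" using assms by (simp add: bounded_Times)
  then have "finite {l\<in>L. l \<in> ball s \<rho> \<times> V}" by (rule finite_bounded)
  then show ?thesis by (rule finite_subset[rotated]) (auto simp: mem_Times_iff)
qed

lemma dt_upper:
  assumes F: "F \<in> sets lebesgue" "bounded F" "measure lebesgue F = c"
    "\<forall>q\<in>F. norm (fst q) \<le> R \<and> norm (snd q) < \<epsilon>"
    "\<forall>l\<in>L. \<forall>l'\<in>L. \<forall>f\<in>F. \<forall>f'\<in>F. l + f = l' + f' \<longrightarrow> l = l'"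
    and V: "bounded V"
  shows "c * real (card {l\<in>L. snd l \<in> V \<and> fst l \<in> ball s \<rho>}) \<le>
         measure lebesgue (ball s (\<rho> + R)) * measure lebesgue (outer V \<epsilon>)"
proof -
  define S where "S = {l\<in>L. snd l \<in> V \<and> fst l \<in> ball s \<rho>}"
  define Q where "Q = ball s (\<rho> + R) \<times> outer V \<epsilon>"
  have Q: "Q \<in> fmeasurable lebesgue" unfolding Q_def
    by (intro lmeasurable_open bounded_Times bounded_ball outer_bounded V open_Times open_ball outer_open)
  have "real (card S) * c \<le> measure lebesgue Q"
  proof (rule count_upper[OF F(1-3) _ _ _ Q])
    show "finite S" unfolding S_def by (rule finite_cnt[OF V])
    show "\<And>l l' f f'. l \<in> S \<Longrightarrow> l' \<in> S \<Longrightarrow> f \<in> F \<Longrightarrow> f' \<in> F \<Longrightarrow> l + f = l' + f' \<Longrightarrow> l = l'"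
      using F(5) unfolding S_def by blast
    fix l assume l: "l \<in> S"
    show "(+) l ` F \<subseteq> Q"
    proof
      fix x assume "x \<in> (+) l ` F"
      then obtain f where f: "f \<in> F" "x = l + f" by blast
      have "dist s (fst x) \<le> dist s (fst l) + norm (fst f)"
        using f(2) dist_triangle[of s "fst x" "fst l"] by (simp add: dist_norm)
      moreover have "dist s (fst l) < \<rho>" using l unfolding S_def by auto
      ultimately have 1: "fst x \<in> ball s (\<rho> + R)" using F(4) f(1) by fastforce
      have "dist (snd l) (snd x) < \<epsilon>" using F(4) f by (simp add: dist_norm)
      then have 2: "snd x \<in> outer V \<epsilon>" using l unfolding S_def outer_def by auto
      show "x \<in> Q" unfolding Q_def using 1 2 by (simp add: mem_Times_iff)
    qed
  qed
  moreover have "measure lebesgue Q = measure lebesgue (ball s (\<rho> + R)) * measure lebesgue (outer V \<epsilon>)"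
    unfolding Q_def by (intro measure_lebesgue_Times borel_open open_ball outer_open)
  ultimately show ?thesis unfolding S_def by (simp add: mult.commute)
qed

lemma dt_lower:
  assumes F: "F \<in> sets lebesgue" "bounded F" "measure lebesgue F = c"
    "\<forall>q\<in>F. norm (fst q) \<le> R \<and> norm (snd q) < \<epsilon>" "\<forall>x. \<exists>l\<in>L. x - l \<in> F"
    and V: "bounded V"
  shows "measure lebesgue (ball s (\<rho> - R)) * measure lebesgue (inner V \<epsilon>) \<le>
         c * real (card {l\<in>L. snd l \<in> V \<and> fst l \<in> ball s \<rho>})"
proof -
  define S where "S = {l\<in>L. snd l \<in> V \<and> fst l \<in> ball s \<rho>}"
  define Q where "Q = ball s (\<rho> - R) \<times> inner V \<epsilon>"
  define S' where "S' = {l\<in>L. \<exists>q\<in>Q. q - l \<in> F}"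
  have finS: "finite S" unfolding S_def by (rule finite_cnt[OF V])
  have S'S: "S' \<subseteq> S"
  proof
    fix l assume "l \<in> S'"
    then obtain q where q: "l \<in> L" "q \<in> Q" "q - l \<in> F" unfolding S'_def by blast
    define f where "f = q - l"
    have lq: "l = q - f" unfolding f_def by simp
    have f: "norm (fst f) \<le> R" "norm (snd f) < \<epsilon>" using F(4) q(3) unfolding f_def by auto
    have "dist s (fst l) \<le> dist s (fst q) + norm (fst f)"
      using lq dist_triangle[of s "fst l" "fst q"] by (simp add: dist_norm)
    moreover have "dist s (fst q) < \<rho> - R" using q(2) unfolding Q_def by (simp add: mem_Times_iff)
    ultimately have 1: "fst l \<in> ball s \<rho>" using f(1) by simp
    have "ball (snd q) \<epsilon> \<subseteq> V" using q(2) unfolding Q_def inner_def by (simp add: mem_Times_iff)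
    moreover have "dist (snd q) (snd l) < \<epsilon>" using lq f(2) by (simp add: dist_norm)
    ultimately have 2: "snd l \<in> V" by auto
    show "l \<in> S" unfolding S_def using 1 2 q(1) by blast
  qed
  have "measure lebesgue Q \<le> real (card S') * c"
  proof (rule count_lower[OF F(1-3)])
    show "finite S'" using finite_subset[OF S'S finS] .
    show "Q \<subseteq> (\<Union>l\<in>S'. (+) l ` F)"
    proof
      fix q assume "q \<in> Q"
      obtain l where l: "l \<in> L" "q - l \<in> F" using F(5) by blast
      then have "l \<in> S'" unfolding S'_def using \<open>q \<in> Q\<close> by blast
      moreover have "q = l + (q - l)" by simp
      ultimately show "q \<in> (\<Union>l\<in>S'. (+) l ` F)" using l(2) by blast
    qed
    show "Q \<in> sets lebesgue" unfolding Q_def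
      by (intro borel_leb times_borel borel_open[OF open_ball] borel_closed[OF inner_closed])
  qed
  also have "\<dots> \<le> real (card S) * c" using card_mono[OF finS S'S] c_pos by simp
  finally have "measure lebesgue Q \<le> real (card S) * c" .
  moreover have "measure lebesgue Q = measure lebesgue (ball s (\<rho> - R)) * measure lebesgue (inner V \<epsilon>)"
    unfolding Q_def by (intro measure_lebesgue_Times borel_open[OF open_ball] borel_closed[OF inner_closed])
  ultimately show ?thesis unfolding S_def by (simp add: mult.commute)
qed

end


context cpsc
begin

lemma density:
  fixes V :: "'b set" and s :: 'a and a :: real
  assumes V: "compact V" "frontier V \<in> null_sets lebesgue"
  shows "((\<lambda>r. real (card {l\<in>L. snd l \<in> V \<and> fst l \<in> ball s (r + a)}) / measure lebesgue (ball (0::'a) r))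
           \<longlongrightarrow> measure lebesgue V / c) at_top"
proof (rule squeeze[OF c_pos measure_nonneg])
  fix \<delta> :: real assume \<delta>: "\<delta> > 0" "\<delta> \<le> 1"
  define \<mu> where "\<mu> = measure lebesgue V"
  have bV: "bounded V" using V(1) compact_imp_bounded by blast
  obtain e where e: "e > 0" "measure lebesgue (outer V e) \<le> \<mu> + \<delta>" "\<mu> - \<delta> \<le> measure lebesgue (inner V e)"
    using approx[OF V \<delta>(1)] unfolding \<mu>_def by blast
  obtain F R where F: "F \<in> sets lebesgue" "bounded F" "measure lebesgue F = c"
      "\<forall>q\<in>F. norm (fst q) \<le> R \<and> norm (snd q) < e" "\<forall>x. \<exists>l\<in>L. x - l \<in> F"
      "\<forall>l\<in>L. \<forall>l'\<in>L. \<forall>f\<in>F. \<forall>f'\<in>F. l + f = l' + f' \<longrightarrow> l = l'"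
    using thin[OF e(1)] by blast
  define N where "N r = real (card {l\<in>L. snd l \<in> V \<and> fst l \<in> ball s (r + a)})" for r
  define v where "v r = measure lebesgue (ball (0::'a) r)" for r
  define mo where "mo = measure lebesgue (outer V e)"
  define mi where "mi = measure lebesgue (inner V e)"
  have mo0: "mo \<ge> 0" "mi \<ge> 0" unfolding mo_def mi_def by auto
  have lim1: "((\<lambda>r. measure lebesgue (ball s (r + (a + R))) / v r) \<longlongrightarrow> 1) at_top"
    unfolding v_def by (rule ball_ratio)
  have lim2: "((\<lambda>r. measure lebesgue (ball s (r + (a - R))) / v r) \<longlongrightarrow> 1) at_top"
    unfolding v_def by (rule ball_ratio)
  have ev1: "eventually (\<lambda>r. measure lebesgue (ball s (r + (a + R))) / v r < 1 + \<delta>) at_top"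
    using lim1 \<delta>(1) by (intro order_tendstoD) auto
  have ev2: "eventually (\<lambda>r. 1 - \<delta> < measure lebesgue (ball s (r + (a - R))) / v r) at_top"
    using lim2 \<delta>(1) by (intro order_tendstoD) auto
  have ev3: "eventually (\<lambda>r. (0::real) < r) at_top" by (rule eventually_gt_at_top)
  show "eventually (\<lambda>r. (1 - \<delta>) * (measure lebesgue V - \<delta>) / c \<le> N r / measure lebesgue (ball (0::'a) r) \<and>
                  N r / measure lebesgue (ball (0::'a) r) \<le> (1 + \<delta>) * (measure lebesgue V + \<delta>) / c) at_top"
    using eventually_conj[OF ev1 eventually_conj[OF ev2 ev3]]
  proof (rule eventually_mono)
    fix r :: real
    assume r: "measure lebesgue (ball s (r + (a + R))) / v r < 1 + \<delta> \<and>
       1 - \<delta> < measure lebesgue (ball s (r + (a - R))) / v r \<and> 0 < r"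
    define up where "up = measure lebesgue (ball s (r + (a + R))) / v r"
    define lo where "lo = measure lebesgue (ball s (r + (a - R))) / v r"
    have vpos: "v r > 0" unfolding v_def using r ball_vol[of "0::'a" r] ball_vol_pos[where 'a='a] by simp
    have up0: "up \<ge> 0" unfolding up_def using vpos by simp
    have c: "c > 0" by (rule c_pos)
    have U: "c * N r \<le> measure lebesgue (ball s (r + (a + R))) * mo"
    proof -
      have eq: "r + (a + R) = r + a + R" by simp
      show ?thesis unfolding eq N_def mo_def by (rule dt_upper[OF F(1-4) F(6) bV])
    qed
    have Lo: "measure lebesgue (ball s (r + (a - R))) * mi \<le> c * N r"
    proof -
      have eq: "r + (a - R) = r + a - R" by simp
      show ?thesis unfolding eq N_def mi_def by (rule dt_lower[OF F(1-5) bV])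
    qed
    have "N r / v r \<le> up * mo / c"
    proof -
      have "N r \<le> measure lebesgue (ball s (r + (a + R))) * mo / c" using U c by (simp add: field_simps)
      then have "N r / v r \<le> measure lebesgue (ball s (r + (a + R))) * mo / c / v r"
        by (rule divide_right_mono) (use vpos in simp)
      also have "\<dots> = up * mo / c" unfolding up_def by simp
      finally show ?thesis .
    qed
    also have "\<dots> \<le> (1 + \<delta>) * (\<mu> + \<delta>) / c"
    proof -
      have "up * mo \<le> (1 + \<delta>) * (\<mu> + \<delta>)"
        using r e(2) up0 mo0 unfolding up_def mo_def by (intro mult_mono) auto
      then show ?thesis using c by (simp add: divide_right_mono)
    qed
    finally have A: "N r / v r \<le> (1 + \<delta>) * (\<mu> + \<delta>) / c" .
    have "(1 - \<delta>) * (\<mu> - \<delta>) / c \<le> lo * mi / c"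
    proof -
      have "(1 - \<delta>) * (\<mu> - \<delta>) \<le> lo * mi"
      proof (cases "\<mu> - \<delta> \<le> 0")
        case True
        then have "(1 - \<delta>) * (\<mu> - \<delta>) \<le> 0" using \<delta> by (simp add: mult_nonneg_nonpos)
        moreover have "0 \<le> lo" using r \<delta> unfolding lo_def by linarith
        then have "0 \<le> lo * mi" using mo0 by simp
        ultimately show ?thesis by linarith
      next
        case False
        then show ?thesis using r e(3) \<delta> unfolding lo_def mi_def by (intro mult_mono) auto
      qed
      then show ?thesis using c by (simp add: divide_right_mono)
    qed
    also have "\<dots> \<le> N r / v r"
    proof -
      have "measure lebesgue (ball s (r + (a - R))) * mi / c \<le> N r" using Lo c by (simp add: field_simps)
      then have "measure lebesgue (ball s (r + (a - R))) * mi / c / v r \<le> N r / v r"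
        by (rule divide_right_mono) (use vpos in simp)
      moreover have "measure lebesgue (ball s (r + (a - R))) * mi / c / v r = lo * mi / c" unfolding lo_def by simp
      ultimately show ?thesis by simp
    qed
    finally have B: "(1 - \<delta>) * (\<mu> - \<delta>) / c \<le> N r / v r" .
    show "(1 - \<delta>) * (measure lebesgue V - \<delta>) / c \<le> N r / measure lebesgue (ball (0::'a) r) \<and>
          N r / measure lebesgue (ball (0::'a) r) \<le> (1 + \<delta>) * (measure lebesgue V + \<delta>) / c"
      using A B unfolding v_def \<mu>_def by simp
  qed
qed

end


lemma mem_transl: "x \<in> (+) y ` W \<longleftrightarrow> x - y \<in> W" for x y :: "'b::ab_group_add"
proof
  assume "x \<in> (+) y ` W" then show "x - y \<in> W" by auto
next
  assume "x - y \<in> W"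
  then have "y + (x - y) \<in> (+) y ` W" by blast
  then show "x \<in> (+) y ` W" by simp
qed

lemma Vd_props:
  fixes W :: "'b::euclidean_space set"
  assumes W: "compact W" "frontier W \<in> null_sets lebesgue"
  shows "compact (W \<inter> (+) y ` W)" "frontier (W \<inter> (+) y ` W) \<in> null_sets lebesgue"
proof -
  show "compact (W \<inter> (+) y ` W)" using W(1) by (intro compact_Int compact_translation)
  have "negligible (frontier W)" using W(2) by (simp add: negligible_iff_null_sets)
  then have "negligible (frontier W \<union> (+) y ` frontier W)"
    by (intro negligible_Un negligible_translation)
  moreover have "frontier (W \<inter> (+) y ` W) \<subseteq> frontier W \<union> (+) y ` frontier W"
    using frontier_Int_subset[of W "(+) y ` W"] by (simp add: frontier_translation)
  ultimately have "negligible (frontier (W \<inter> (+) y ` W))" using negligible_subset by blast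
  then show "frontier (W \<inter> (+) y ` W) \<in> null_sets lebesgue" by (simp add: negligible_iff_null_sets)
qed

context cpsc
begin

lemma star_fst: "l \<in> L \<Longrightarrow> star_map L (fst l) = snd l"
  unfolding star_map_def using the_inv_into_f_f[OF inj] by simp

lemma count_limit:
  fixes W :: "'b set" and t :: 'a
  assumes W: "compact W" "frontier W \<in> null_sets lebesgue" and d: "d \<in> L"
  shows "((\<lambda>r. real (card {l\<in>L. snd l \<in> W \<and> fst l \<in> ball (-t) r \<and> snd (l - d) \<in> W \<and> fst (l - d) \<in> ball (-t) r})
            / measure lebesgue (ball (0::'a) r)) \<longlongrightarrow> covariogram W (snd d) / c) at_top"
proof -
  define Vd where "Vd = W \<inter> (+) (snd d) ` W"
  have Vd: "compact Vd" "frontier Vd \<in> null_sets lebesgue" unfolding Vd_def using Vd_props[OF W] by auto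
  have bVd: "bounded Vd" using Vd(1) compact_imp_bounded by blast
  define A where "A r = {l\<in>L. snd l \<in> W \<and> fst l \<in> ball (-t) r \<and> snd (l - d) \<in> W \<and> fst (l - d) \<in> ball (-t) r}" for r
  define Up where "Up r = {l\<in>L. snd l \<in> Vd \<and> fst l \<in> ball (-t) (r + 0)}" for r
  define Lo where "Lo r = {l\<in>L. snd l \<in> Vd \<and> fst l \<in> ball (-t) (r + - norm (fst d))}" for r
  have AU: "A r \<subseteq> Up r" for r unfolding A_def Up_def Vd_def by (auto simp: mem_transl)
  have LA: "Lo r \<subseteq> A r" for r
  proof
    fix l assume l: "l \<in> Lo r"
    then have "dist (-t) (fst l) < r - norm (fst d)" unfolding Lo_def by auto
    moreover have "dist (-t) (fst l - fst d) \<le> dist (-t) (fst l) + norm (fst d)"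
      using dist_triangle[of "-t" "fst l - fst d" "fst l"] by (simp add: dist_norm)
    moreover have "dist (-t) (fst l) \<le> dist (-t) (fst l) + norm (fst d)" by simp
    ultimately have "dist (-t) (fst l) < r" "dist (-t) (fst l - fst d) < r"
      using norm_ge_zero[of "fst d"] by linarith+
    then have "fst l \<in> ball (-t) r" "fst l - fst d \<in> ball (-t) r" by auto
    then show "l \<in> A r" using l unfolding Lo_def A_def Vd_def by (auto simp: mem_transl)
  qed
  have finU: "finite (Up r)" for r unfolding Up_def by (rule finite_cnt[OF bVd])
  have lim1: "((\<lambda>r. real (card (Lo r)) / measure lebesgue (ball (0::'a) r)) \<longlongrightarrow> measure lebesgue Vd / c) at_top"
    unfolding Lo_def by (rule density[OF Vd])
  have lim2: "((\<lambda>r. real (card (Up r)) / measure lebesgue (ball (0::'a) r)) \<longlongrightarrow> measure lebesgue Vd / c) at_top"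
    unfolding Up_def by (rule density[OF Vd])
  have "((\<lambda>r. real (card (A r)) / measure lebesgue (ball (0::'a) r)) \<longlongrightarrow> measure lebesgue Vd / c) at_top"
  proof (rule tendsto_sandwich[OF _ _ lim1 lim2])
    show "eventually (\<lambda>r. real (card (Lo r)) / measure lebesgue (ball (0::'a) r) \<le>
                     real (card (A r)) / measure lebesgue (ball (0::'a) r)) at_top"
      using card_mono[OF finite_subset[OF AU finU] LA] by (intro always_eventually allI divide_right_mono) auto
    show "eventually (\<lambda>r. real (card (A r)) / measure lebesgue (ball (0::'a) r) \<le>
                     real (card (Up r)) / measure lebesgue (ball (0::'a) r)) at_top"
      using card_mono[OF finU AU] by (intro always_eventually allI divide_right_mono) auto
  qed
  then show ?thesis unfolding A_def Vd_def covariogram_def by simp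
qed

end


lemma dist_neg_norm: "dist (- t) y = norm (t + y)" for t y :: "'a::real_normed_vector"
  using norm_minus_cancel[of "t + y"] by (simp add: dist_norm)

context cpsc
begin

lemma autocorr:
  fixes W :: "'b set" and t :: 'a
  assumes W: "compact W" "frontier W \<in> null_sets lebesgue"
  shows "has_autocorrelation ((+) t ` cp_set L W)
     (\<lambda>f. \<Sum>d\<in>{d\<in>L. f (fst d) \<noteq> 0 \<and> covariogram W (snd d) \<noteq> 0}. f (fst d) * covariogram W (snd d) / c)"
  unfolding has_autocorrelation_def
proof (intro ballI)
  fix f :: "'a \<Rightarrow> real" assume f: "f \<in> Cc"
  define K where "K = closure {x. f x \<noteq> 0}"
  have K: "compact K" using f unfolding Cc_def K_def by auto
  define Wd where "Wd = {a - b | a b. a \<in> W \<and> b \<in> W}"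
  have cWd: "compact Wd" unfolding Wd_def by (rule compact_differences[OF W(1) W(1)])
  define D where "D = {d\<in>L. f (fst d) \<noteq> 0 \<and> snd d \<in> Wd}"
  have finD: "finite D"
  proof -
    have "bounded (K \<times> Wd)" using K cWd by (intro bounded_Times compact_imp_bounded)
    then have "finite {l\<in>L. l \<in> K \<times> Wd}" by (rule finite_bounded)
    moreover have "D \<subseteq> {l\<in>L. l \<in> K \<times> Wd}"
      unfolding D_def K_def using closure_subset by (fastforce simp: mem_Times_iff)
    ultimately show ?thesis using finite_subset by blast
  qed
  define LW where "LW r = {l\<in>L. snd l \<in> W \<and> fst l \<in> ball (-t) r}" for r
  define h where "h l = t + fst l" for l :: "'a \<times> 'b"
  define A where "A d r = {l\<in>L. snd l \<in> W \<and> fst l \<in> ball (-t) r \<and> snd (l - d) \<in> W \<and> fst (l - d) \<in> ball (-t) r}" for d r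
  define v where "v r = measure lebesgue (ball (0::'a) r)" for r
  have bW: "bounded W" using W(1) compact_imp_bounded by blast
  have finLW: "finite (LW r)" for r unfolding LW_def using finite_cnt[OF bW] by simp
  have injh: "inj_on h L" unfolding h_def using inj by (auto simp: inj_on_def)
  have Lam: "(+) t ` cp_set L W \<inter> ball 0 r = h ` LW r" for r
  proof
    show "(+) t ` cp_set L W \<inter> ball 0 r \<subseteq> h ` LW r"
    proof
      fix x assume x: "x \<in> (+) t ` cp_set L W \<inter> ball 0 r"
      then obtain l where l: "l \<in> L" "star_map L (fst l) \<in> W" "x = t + fst l"
        unfolding cp_set_def by auto
      have "snd l \<in> W" using l star_fst by simp
      moreover have "fst l \<in> ball (-t) r" using x l(3) by (simp add: dist_neg_norm)
      ultimately show "x \<in> h ` LW r" unfolding LW_def h_def using l by blast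
    qed
    show "h ` LW r \<subseteq> (+) t ` cp_set L W \<inter> ball 0 r"
    proof
      fix x assume "x \<in> h ` LW r"
      then obtain l where l: "l \<in> L" "snd l \<in> W" "fst l \<in> ball (-t) r" "x = t + fst l"
        unfolding LW_def h_def by auto
      have "fst l \<in> cp_set L W" unfolding cp_set_def using l star_fst by auto
      then show "x \<in> (+) t ` cp_set L W \<inter> ball 0 r" using l by (simp add: dist_neg_norm)
    qed
  qed
  have eq: "autocorr_approx ((+) t ` cp_set L W) r f = (\<Sum>d\<in>D. f (fst d) * (real (card (A d r)) / v r))" for r
  proof -
    define P where "P = {p \<in> LW r \<times> LW r. f (fst (fst p - snd p)) \<noteq> 0}"
    define g where "g p = fst p - snd p" for p :: "('a \<times> 'b) \<times> ('a \<times> 'b)"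
    have finP: "finite P" unfolding P_def using finLW by simp
    have "(\<Sum>x\<in>(+) t ` cp_set L W \<inter> ball 0 r. \<Sum>y\<in>(+) t ` cp_set L W \<inter> ball 0 r. f (x - y))
        = (\<Sum>l\<in>LW r. \<Sum>l'\<in>LW r. f (h l - h l'))"
    proof -
      have ij: "inj_on h (LW r)" using injh by (rule inj_on_subset) (auto simp: LW_def)
      show ?thesis unfolding Lam sum.reindex[OF ij] by (simp add: sum.reindex[OF ij])
    qed
    also have "\<dots> = (\<Sum>p\<in>LW r \<times> LW r. f (fst (fst p - snd p)))"
      unfolding sum.cartesian_product h_def by (simp add: case_prod_beta)
    also have "\<dots> = (\<Sum>p\<in>P. f (fst (fst p - snd p)))"
      unfolding P_def using finLW by (intro sum.mono_neutral_right) auto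
    also have "\<dots> = (\<Sum>d\<in>D. \<Sum>p\<in>{p\<in>P. g p = d}. f (fst (g p)))"
    proof -
      have "g ` P \<subseteq> D"
      proof
        fix y assume "y \<in> g ` P"
        then obtain p where p: "p \<in> P" "y = fst p - snd p" unfolding g_def by blast
        have "fst p \<in> L" "snd p \<in> L" "snd (fst p) \<in> W" "snd (snd p) \<in> W"
          using p(1) unfolding P_def LW_def by auto
        then have "y \<in> L" "snd y \<in> Wd" using p(2) L_group unfolding Wd_def by auto
        then show "y \<in> D" using p unfolding D_def P_def by auto
      qed
      from sum.group[OF finP finD this, of "\<lambda>p. f (fst (g p))"] show ?thesis unfolding g_def by simp
    qed
    also have "\<dots> = (\<Sum>d\<in>D. f (fst d) * real (card (A d r)))"
    proof (rule sum.cong[OF refl])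
      fix d assume d: "d \<in> D"
      have set_eq: "{p\<in>P. g p = d} = (\<lambda>l. (l, l - d)) ` A d r"
      proof
        show "{p\<in>P. g p = d} \<subseteq> (\<lambda>l. (l, l - d)) ` A d r"
        proof
          fix p assume p: "p \<in> {p\<in>P. g p = d}"
          then have "snd p = fst p - d" unfolding g_def by auto
          moreover have "fst p \<in> A d r" using p calculation unfolding P_def LW_def A_def g_def by auto
          ultimately show "p \<in> (\<lambda>l. (l, l - d)) ` A d r" by (metis (no_types, lifting) image_eqI prod.collapse)
        qed
        show "(\<lambda>l. (l, l - d)) ` A d r \<subseteq> {p\<in>P. g p = d}"
        proof
          fix p assume "p \<in> (\<lambda>l. (l, l - d)) ` A d r"
          then obtain l where l: "l \<in> A d r" "p = (l, l - d)" by blast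
          have "d \<in> L" "f (fst d) \<noteq> 0" using d unfolding D_def by auto
          then have "l - d \<in> L" using l(1) L_group unfolding A_def by auto
          then show "p \<in> {p\<in>P. g p = d}"
            using l \<open>f (fst d) \<noteq> 0\<close> unfolding P_def LW_def A_def g_def by auto
        qed
      qed
      have "card ((\<lambda>l. (l, l - d)) ` A d r) = card (A d r)"
        by (rule card_image) (auto simp: inj_on_def)
      then have card_eq: "card {p\<in>P. g p = d} = card (A d r)" using set_eq by simp
      have "(\<Sum>p\<in>{p\<in>P. g p = d}. f (fst (g p))) = (\<Sum>p\<in>{p\<in>P. g p = d}. f (fst d))" by simp
      also have "\<dots> = real (card {p\<in>P. g p = d}) * f (fst d)" by simp
      finally show "(\<Sum>p\<in>{p\<in>P. g p = d}. f (fst (g p))) = f (fst d) * real (card (A d r))"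
        using card_eq by simp
    qed
    finally have "(\<Sum>x\<in>(+) t ` cp_set L W \<inter> ball 0 r. \<Sum>y\<in>(+) t ` cp_set L W \<inter> ball 0 r. f (x - y))
        = (\<Sum>d\<in>D. f (fst d) * real (card (A d r)))" .
    then show ?thesis unfolding autocorr_approx_def v_def
      by (simp add: sum_divide_distrib)
  qed
  have lim: "((\<lambda>r. \<Sum>d\<in>D. f (fst d) * (real (card (A d r)) / v r)) \<longlongrightarrow>
              (\<Sum>d\<in>D. f (fst d) * (covariogram W (snd d) / c))) at_top"
  proof (intro tendsto_sum tendsto_mult_left)
    fix d assume "d \<in> D"
    then have "d \<in> L" unfolding D_def by auto
    show "((\<lambda>r. real (card (A d r)) / v r) \<longlongrightarrow> covariogram W (snd d) / c) at_top"
      unfolding A_def v_def by (rule count_limit[OF W \<open>d \<in> L\<close>])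
  qed
  have val0: "(\<Sum>d\<in>D. f (fst d) * (covariogram W (snd d) / c)) =
      (\<Sum>d\<in>{d\<in>L. f (fst d) \<noteq> 0 \<and> covariogram W (snd d) \<noteq> 0}. f (fst d) * (covariogram W (snd d) / c))"
  proof (rule sum.mono_neutral_right[OF finD])
    show "{d\<in>L. f (fst d) \<noteq> 0 \<and> covariogram W (snd d) \<noteq> 0} \<subseteq> D"
    proof
      fix d assume d: "d \<in> {d\<in>L. f (fst d) \<noteq> 0 \<and> covariogram W (snd d) \<noteq> 0}"
      then have "W \<inter> (+) (snd d) ` W \<noteq> {}" unfolding covariogram_def by auto
      then obtain w where "w \<in> W" "w \<in> (+) (snd d) ` W" by blast
      then have "w \<in> W" "w - snd d \<in> W" using mem_transl by blast+
      moreover have "snd d = w - (w - snd d)" by simp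
      ultimately have "snd d \<in> Wd" unfolding Wd_def by blast
      then show "d \<in> D" using d unfolding D_def by auto
    qed
    show "\<forall>i\<in>D - {d\<in>L. f (fst d) \<noteq> 0 \<and> covariogram W (snd d) \<noteq> 0}. f (fst i) * (covariogram W (snd i) / c) = 0"
      unfolding D_def by auto
  qed
  have val: "(\<Sum>d\<in>D. f (fst d) * (covariogram W (snd d) / c)) =
      (\<Sum>d\<in>{d\<in>L. f (fst d) \<noteq> 0 \<and> covariogram W (snd d) \<noteq> 0}. f (fst d) * covariogram W (snd d) / c)"
    unfolding val0 by simp
  show "((\<lambda>r. autocorr_approx ((+) t ` cp_set L W) r f) \<longlongrightarrow>
      (\<Sum>d\<in>{d\<in>L. f (fst d) \<noteq> 0 \<and> covariogram W (snd d) \<noteq> 0}. f (fst d) * covariogram W (snd d) / c)) at_top"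
    unfolding eq val[symmetric] by (rule lim)
qed

end


lemma covario_cont:
  fixes W :: "'b::euclidean_space set"
  assumes W: "compact W" "frontier W \<in> null_sets lebesgue" and "\<delta> > 0"
  shows "\<exists>e>0. \<forall>y'. dist y' y < e \<longrightarrow> \<bar>covariogram W y' - covariogram W y\<bar> \<le> 2 * \<delta>"
proof -
  obtain e where e: "e > 0" "measure lebesgue (outer W e) \<le> measure lebesgue W + \<delta>"
    "measure lebesgue W - \<delta> \<le> measure lebesgue (inner W e)"
    using approx[OF W \<open>\<delta> > 0\<close>] by blast
  have bW: "bounded W" using W(1) compact_imp_bounded by blast
  have cW: "closed W" using W(1) compact_imp_closed by blast
  define O1 where "O1 = outer W e"
  define I1 where "I1 = inner W e"
  have WO: "W \<subseteq> O1" unfolding O1_def outer_def using e(1) by force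
  have IW: "I1 \<subseteq> W" unfolding I1_def using inner_sub[OF e(1)] .
  have O1m: "O1 \<in> fmeasurable lebesgue" unfolding O1_def
    by (intro lmeasurable_open outer_bounded bW outer_open)
  have I1m: "I1 \<in> sets lebesgue" unfolding I1_def by (intro borel_leb borel_closed inner_closed)
  define X where "X = W \<inter> (+) y ` I1"
  define Y where "Y = W \<inter> (+) y ` O1"
  have Wm: "W \<in> sets lebesgue" by (intro borel_leb borel_closed cW)
  have O1l: "O1 \<in> sets lebesgue" using O1m by (simp add: fmeasurable_def)
  have Xm: "X \<in> fmeasurable lebesgue" unfolding X_def
    by (rule bounded_set_imp_lmeasurable[OF bounded_Int[OF disjI1[OF bW]] sets.Int[OF Wm lebesgue_sets_translation[OF I1m]]])
  have Ym: "Y \<in> fmeasurable lebesgue" unfolding Y_def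
    by (rule bounded_set_imp_lmeasurable[OF bounded_Int[OF disjI1[OF bW]] sets.Int[OF Wm lebesgue_sets_translation[OF O1l]]])
  have cm: "W \<inter> (+) z ` W \<in> sets lebesgue" for z
    by (intro sets.Int Wm lebesgue_sets_translation)
  have XY: "measure lebesgue Y - measure lebesgue X \<le> 2 * \<delta>"
  proof -
    have "X \<subseteq> Y" unfolding X_def Y_def using IW WO by blast
    then have "measure lebesgue Y - measure lebesgue X = measure lebesgue (Y - X)"
      using measurable_measure_Diff[OF Ym fmeasurableD[OF Xm] \<open>X \<subseteq> Y\<close>] by simp
    also have "\<dots> \<le> measure lebesgue ((+) y ` (O1 - I1))"
    proof (rule measure_mono_fmeasurable)
      show "Y - X \<subseteq> (+) y ` (O1 - I1)" unfolding X_def Y_def by auto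
      show "Y - X \<in> sets lebesgue" using Xm Ym by (auto simp: fmeasurable_def)
      show "(+) y ` (O1 - I1) \<in> fmeasurable lebesgue"
    proof (rule bounded_set_imp_lmeasurable)
      have "bounded O1" unfolding O1_def by (intro outer_bounded bW)
      then have "bounded (O1 - I1)" by (rule bounded_subset) blast
      then show "bounded ((+) y ` (O1 - I1))" by (rule bounded_translation)
      show "(+) y ` (O1 - I1) \<in> sets lebesgue"
        by (rule lebesgue_sets_translation[OF sets.Diff[OF O1l I1m]])
    qed
    qed
    also have "\<dots> = measure lebesgue (O1 - I1)" by (simp add: measure_translation)
    also have "\<dots> = measure lebesgue O1 - measure lebesgue I1"
    proof -
      have "I1 \<subseteq> O1" using IW WO by blast
      then show ?thesis using measurable_measure_Diff[OF O1m I1m] by simp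
    qed
    also have "\<dots> \<le> 2 * \<delta>" using e(2,3) unfolding O1_def I1_def by linarith
    finally show ?thesis .
  qed
  have between: "measure lebesgue X \<le> covariogram W z \<and> covariogram W z \<le> measure lebesgue Y"
    if z: "dist z y < e \<or> z = y" for z
  proof -
    have 1: "X \<subseteq> W \<inter> (+) z ` W"
    proof
      fix v assume "v \<in> X"
      then have v: "v \<in> W" "v - y \<in> I1" unfolding X_def by (auto simp: mem_transl)
      then have "ball (v - y) e \<subseteq> W" unfolding I1_def inner_def by auto
      moreover have "v - z \<in> ball (v - y) e"
        using z e(1) by (auto simp: dist_norm norm_minus_commute)
      ultimately have "v - z \<in> W" by blast
      then show "v \<in> W \<inter> (+) z ` W" using v(1) by (simp add: mem_transl)
    qed
    have 2: "W \<inter> (+) z ` W \<subseteq> Y"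
    proof
      fix v assume v: "v \<in> W \<inter> (+) z ` W"
      then have "v - z \<in> W" by (simp add: mem_transl)
      moreover have "dist (v - z) (v - y) < e"
        using z e(1) by (auto simp: dist_norm norm_minus_commute)
      ultimately have "v - y \<in> O1" unfolding O1_def outer_def by auto
      then show "v \<in> Y" using v unfolding Y_def by (simp add: mem_transl)
    qed
    have cfm: "W \<inter> (+) z ` W \<in> fmeasurable lebesgue"
      by (rule bounded_set_imp_lmeasurable[OF bounded_Int[OF disjI1[OF bW]] cm])
    have "measure lebesgue X \<le> measure lebesgue (W \<inter> (+) z ` W)"
      by (rule measure_mono_fmeasurable[OF 1 fmeasurableD[OF Xm] cfm])
    moreover have "measure lebesgue (W \<inter> (+) z ` W) \<le> measure lebesgue Y"
      by (rule measure_mono_fmeasurable[OF 2 cm Ym])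
    ultimately show ?thesis unfolding covariogram_def by blast
  qed
  show ?thesis
  proof (intro exI[of _ e] conjI allI impI e(1))
    fix y' assume "dist y' y < e"
    then show "\<bar>covariogram W y' - covariogram W y\<bar> \<le> 2 * \<delta>"
      using between[of y'] between[of y] XY by auto
  qed
qed



context cpsc
begin

definition gam :: "'b set \<Rightarrow> ('a \<Rightarrow> real) \<Rightarrow> real" where
  "gam G f = (\<Sum>d\<in>{d\<in>L. f (fst d) \<noteq> 0 \<and> covariogram G (snd d) \<noteq> 0}. f (fst d) * covariogram G (snd d) / c)"

lemma gam_single:
  assumes l0: "l0 \<in> L"
    and only: "\<And>d. d \<in> L \<Longrightarrow> f (fst d) \<noteq> 0 \<Longrightarrow> covariogram G (snd d) \<noteq> 0 \<Longrightarrow> d = l0"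
  shows "gam G f = f (fst l0) * covariogram G (snd l0) / c"
proof (cases "f (fst l0) \<noteq> 0 \<and> covariogram G (snd l0) \<noteq> 0")
  case True
  have S: "{d\<in>L. f (fst d) \<noteq> 0 \<and> covariogram G (snd d) \<noteq> 0} = {l0}"
  proof (intro equalityI subsetI)
    fix d assume "d \<in> {d\<in>L. f (fst d) \<noteq> 0 \<and> covariogram G (snd d) \<noteq> 0}"
    then have "d = l0" using only by blast
    then show "d \<in> {l0}" by simp
  next
    fix d assume "d \<in> {l0}"
    then show "d \<in> {d\<in>L. f (fst d) \<noteq> 0 \<and> covariogram G (snd d) \<noteq> 0}" using True l0 by simp
  qed
  show ?thesis unfolding gam_def S by simp
next
  case False
  have S: "{d\<in>L. f (fst d) \<noteq> 0 \<and> covariogram G (snd d) \<noteq> 0} = {}"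
  proof (intro equalityI subsetI)
    fix d assume d: "d \<in> {d\<in>L. f (fst d) \<noteq> 0 \<and> covariogram G (snd d) \<noteq> 0}"
    then have "d = l0" using only by blast
    then show "d \<in> {}" using d False by simp
  qed simp
  show ?thesis unfolding gam_def S using False by auto
qed

lemma cov_nz:
  assumes "covariogram G y \<noteq> 0"
  shows "y \<in> {a - b | a b. a \<in> G \<and> b \<in> G}"
proof -
  have "G \<inter> (+) y ` G \<noteq> {}" using assms unfolding covariogram_def by auto
  then obtain w where "w \<in> G" "w \<in> (+) y ` G" by blast
  then have "w \<in> G" "w - y \<in> G" using mem_transl by blast+
  moreover have "y = w - (w - y)" by simp
  ultimately show ?thesis by blast
qed

lemma bump:
  fixes W W' :: "'b set"
  assumes W: "compact W" and W': "compact W'" and l0: "l0 \<in> L"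
  shows "\<exists>f\<in>Cc. \<exists>\<delta>>0. gam W f = \<delta> * covariogram W (snd l0) / c \<and> gam W' f = \<delta> * covariogram W' (snd l0) / c"
proof -
  define Wd where "Wd = {a - b | a b. a \<in> W \<and> b \<in> W} \<union> {a - b | a b. a \<in> W' \<and> b \<in> W'}"
  have bWd: "bounded Wd" unfolding Wd_def bounded_Un
    using compact_imp_bounded[OF compact_differences[OF W W]] compact_imp_bounded[OF compact_differences[OF W' W']]
    by blast
  define E where "E = {l\<in>L. l \<in> cball (fst l0) 1 \<times> Wd}"
  have finE: "finite E" unfolding E_def by (intro finite_bounded bounded_Times bounded_cball bWd)
  obtain \<delta>0 where \<delta>0: "\<delta>0 > 0" "\<forall>x\<in>fst ` E. x \<noteq> fst l0 \<longrightarrow> \<delta>0 \<le> dist (fst l0) x"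
    using finite_set_avoid[OF finite_imageI[OF finE, of fst], of "fst l0"] by blast
  define \<delta> where "\<delta> = min \<delta>0 1"
  have \<delta>: "\<delta> > 0" "\<delta> \<le> \<delta>0" "\<delta> \<le> 1" unfolding \<delta>_def using \<delta>0 by auto
  define f where "f x = max 0 (\<delta> - dist x (fst l0))" for x
  have fCc: "f \<in> Cc"
  proof -
    have "continuous_on UNIV f" unfolding f_def by (intro continuous_intros)
    moreover have "{x. f x \<noteq> 0} \<subseteq> ball (fst l0) \<delta>" unfolding f_def by (auto simp: dist_commute)
    then have "bounded {x. f x \<noteq> 0}" using bounded_ball bounded_subset by blast
    then have "compact (closure {x. f x \<noteq> 0})" by (simp add: compact_closure)
    ultimately show ?thesis unfolding Cc_def by blast
  qed
  have f0: "f (fst l0) = \<delta>" unfolding f_def using \<delta> by simp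
  have only: "d = l0" if d: "d \<in> L" "f (fst d) \<noteq> 0" "covariogram G (snd d) \<noteq> 0" and G: "G = W \<or> G = W'" for d G
  proof -
    have dd: "dist (fst d) (fst l0) < \<delta>" using d(2) unfolding f_def by (auto simp: max_def split: if_splits)
    have "snd d \<in> Wd" using cov_nz[OF d(3)] G unfolding Wd_def by blast
    moreover have "fst d \<in> cball (fst l0) 1" using dd \<delta> by (simp add: dist_commute)
    ultimately have "d \<in> E" unfolding E_def using d(1) by (simp add: mem_Times_iff)
    then have "fst d = fst l0"
      using \<delta>0(2) dd \<delta>(2) by (force simp: dist_commute)
    then show "d = l0" using inj d(1) l0 by (auto simp: inj_on_def)
  qed
  have onlyW: "d = l0" if "d \<in> L" "f (fst d) \<noteq> 0" "covariogram W (snd d) \<noteq> 0" for d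
    using only[OF that] by blast
  have onlyW': "d = l0" if "d \<in> L" "f (fst d) \<noteq> 0" "covariogram W' (snd d) \<noteq> 0" for d
    using only[OF that] by blast
  have "gam W f = \<delta> * covariogram W (snd l0) / c" using gam_single[OF l0 onlyW] f0 by simp
  moreover have "gam W' f = \<delta> * covariogram W' (snd l0) / c" using gam_single[OF l0 onlyW'] f0 by simp
  ultimately show ?thesis using fCc \<delta>(1) by blast
qed

end

theorem theorem1:
  fixes L :: "('a::euclidean_space \<times> 'b::euclidean_space) set"
    and W W' :: "'b set" and t t' :: 'a
  assumes "cut_project_scheme L"
    and "window W" and "window W'"
  shows "homometric ((+) t ` cp_set L W) ((+) t' ` cp_set L W') \<longleftrightarrow>
         (\<forall>y. covariogram W y = covariogram W' y)"
proof -
  interpret cps L using assms(1) by (rule cps.intro)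
  obtain c where c: "c > 0" "\<And>\<epsilon>. \<epsilon> > 0 \<Longrightarrow> \<exists>F R. F \<in> sets lebesgue \<and> bounded F \<and> measure lebesgue F = c \<and>
      (\<forall>q\<in>F. norm (fst q) \<le> R \<and> norm (snd q) < \<epsilon>) \<and> (\<forall>x. \<exists>l\<in>L. x - l \<in> F) \<and>
      (\<forall>l\<in>L. \<forall>l'\<in>L. \<forall>f\<in>F. \<forall>f'\<in>F. l + f = l' + f' \<longrightarrow> l = l')"
    by (fact thin_domain)
  interpret C: cpsc L c
    by (intro cpsc.intro cpsc_axioms.intro assms(1) c cps.intro)
  have W: "compact W" "frontier W \<in> null_sets lebesgue" using assms(2) unfolding window_def by auto
  have W': "compact W'" "frontier W' \<in> null_sets lebesgue" using assms(3) unfolding window_def by auto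
  have gam_eq: "C.gam G = (\<lambda>f. \<Sum>d\<in>{d\<in>L. f (fst d) \<noteq> 0 \<and> covariogram G (snd d) \<noteq> 0}. f (fst d) * covariogram G (snd d) / c)" for G
    by (rule ext) (simp add: C.gam_def)
  have hW: "has_autocorrelation ((+) t ` cp_set L W) (C.gam W)"
    unfolding gam_eq by (rule C.autocorr[OF W])
  have hW': "has_autocorrelation ((+) t' ` cp_set L W') (C.gam W')"
    unfolding gam_eq by (rule C.autocorr[OF W'])
  show ?thesis
  proof
    assume "homometric ((+) t ` cp_set L W) ((+) t' ` cp_set L W')"
    then obtain \<gamma> where g1: "has_autocorrelation ((+) t ` cp_set L W) \<gamma>"
      and g2: "has_autocorrelation ((+) t' ` cp_set L W') \<gamma>"
      unfolding homometric_def by blast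
    have eqf: "C.gam W f = C.gam W' f" if "f \<in> Cc" for f
    proof -
      have a1: "((\<lambda>r. autocorr_approx ((+) t ` cp_set L W) r f) \<longlongrightarrow> C.gam W f) at_top"
        using hW that unfolding has_autocorrelation_def by blast
      have b1: "((\<lambda>r. autocorr_approx ((+) t ` cp_set L W) r f) \<longlongrightarrow> \<gamma> f) at_top"
        using g1 that unfolding has_autocorrelation_def by blast
      have a2: "((\<lambda>r. autocorr_approx ((+) t' ` cp_set L W') r f) \<longlongrightarrow> C.gam W' f) at_top"
        using hW' that unfolding has_autocorrelation_def by blast
      have b2: "((\<lambda>r. autocorr_approx ((+) t' ` cp_set L W') r f) \<longlongrightarrow> \<gamma> f) at_top"
        using g2 that unfolding has_autocorrelation_def by blast
      have "C.gam W f = \<gamma> f" by (rule tendsto_unique[OF _ a1 b1]) simp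
      moreover have "C.gam W' f = \<gamma> f" by (rule tendsto_unique[OF _ a2 b2]) simp
      ultimately show ?thesis by simp
    qed
    have onL: "covariogram W (snd l) = covariogram W' (snd l)" if lL: "l \<in> L" for l
    proof -
      obtain f \<delta> where f: "f \<in> Cc" "\<delta> > 0" "C.gam W f = \<delta> * covariogram W (snd l) / c"
          "C.gam W' f = \<delta> * covariogram W' (snd l) / c"
        using C.bump[OF W(1) W'(1) lL] by blast
      have "C.gam W f = C.gam W' f" using eqf f(1) by blast
      then have "\<delta> * covariogram W (snd l) / c = \<delta> * covariogram W' (snd l) / c" using f(3,4) by metis
      then have "\<delta> * covariogram W (snd l) = \<delta> * covariogram W' (snd l)" using c(1) by simp
      then show ?thesis using f(2) by simp
    qed
    show "\<forall>y. covariogram W y = covariogram W' y"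
    proof (rule allI, rule ccontr)
      fix y assume ne: "covariogram W y \<noteq> covariogram W' y"
      define \<eta> where "\<eta> = \<bar>covariogram W y - covariogram W' y\<bar>"
      have \<eta>: "\<eta> > 0" unfolding \<eta>_def using ne by simp
      obtain e1 where e1: "e1 > 0" "\<forall>y'. dist y' y < e1 \<longrightarrow> \<bar>covariogram W y' - covariogram W y\<bar> \<le> 2 * (\<eta> / 5)"
        using covario_cont[OF W, of "\<eta> / 5" y] \<eta> by auto
      obtain e2 where e2: "e2 > 0" "\<forall>y'. dist y' y < e2 \<longrightarrow> \<bar>covariogram W' y' - covariogram W' y\<bar> \<le> 2 * (\<eta> / 5)"
        using covario_cont[OF W', of "\<eta> / 5" y] \<eta> by auto
      have "y \<in> closure (snd ` L)" using dense_L by simp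
      then obtain z where z: "z \<in> snd ` L" "dist z y < min e1 e2"
        using e1(1) e2(1) unfolding closure_approachable by (meson min_less_iff_conj)
      then obtain l where l: "l \<in> L" "z = snd l" by blast
      have "covariogram W z = covariogram W' z" using onL[OF l(1)] l(2) by simp
      moreover have "\<bar>covariogram W z - covariogram W y\<bar> \<le> 2 * (\<eta> / 5)" using e1(2) z(2) by simp
      moreover have "\<bar>covariogram W' z - covariogram W' y\<bar> \<le> 2 * (\<eta> / 5)" using e2(2) z(2) by simp
      ultimately have "\<eta> \<le> 4 * (\<eta> / 5)" unfolding \<eta>_def by linarith
      then show False using \<eta> by linarith
    qed
  next
    assume eq: "\<forall>y. covariogram W y = covariogram W' y"
    then have "covariogram W = covariogram W'" by (intro ext) blast
    then have "C.gam W = C.gam W'" unfolding gam_eq by simp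
    then show "homometric ((+) t ` cp_set L W) ((+) t' ` cp_set L W')"
      unfolding homometric_def using hW hW' by auto
  qed
qed


end
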